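(* Fix the setting described in the context, constants $\varphi_0>0$, $\varphi_1\ge0$, and a probability distribution $\mathbf{q}^{\mathrm{hon}}$ on $\mathcal{C}'$. Define $$r_{\mathrm{best}}=\sup_{g}\big(g(\mathbf{q}^{\mathrm{hon}})-\hat T(\mathbf{g})\big),$$ where the supremum is over all crossover min-tradeoff functions $g(\mathbf{q})=\mathbf{g}\cdot\mathbf{q}+k_g$. Then $$r_{\mathrm{best}}=\inf_{J,\boldsymbol\lambda}\Big\{W(\rho^{g}_J)+\hat T^*(\boldsymbol\lambda)\ :\ \mathbf{q}^{\mathrm{hon}}-\boldsymbol\Phi[\rho^{t}_J]-\boldsymbol\lambda=\mathbf{0}\Big\} =\inf_{J,\boldsymbol\lambda,\boldsymbol\nu}\Big\{W(\rho^{g}_J)+s\Big(\tfrac12\textstyle\sum_c\nu_c\Big)\ :\ \mathbf{q}^{\mathrm{hon}}-\boldsymbol\Phi[\rho^{t}_J]-\boldsymbol\lambda=\mathbf{0},\ -\boldsymbol\nu\le\boldsymbol\lambda\le\boldsymbol\nu\Big\},$$ where $J$ ranges over Choi matrices and $\boldsymbol\lambda,\boldsymbol\nu\in\mathbb{R}^{|\mathcal{C}'|}$ (inequalities componentwise). Furthermore, let $L(\rho,\boldsymbol\nu)$ be an affine function such that $L(\rho^{g}_J,\boldsymbol\nu)\le W(\rho^{g}_J)+s(\frac12\sum_c\nu_c)$ for all Choi matrices $J$ and all $\boldsymbol\nu$, and let $$r_{\mathrm{SDP}}=\inf_{J,\boldsymbol\lambda,\boldsymbol\nu}\Big\{L(\rho^{g}_J,\boldsymbol\nu)\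 :\ \mathbf{q}^{\mathrm{hon}}-\boldsymbol\Phi[\rho^{t}_J]-\boldsymbol\lambda=\mathbf{0},\ -\boldsymbol\nu\le\boldsymbol\lambda\le\boldsymbol\nu\Big\},$$ assumed finite. Then there exists $\mathbf{g}^\star\in\mathbb{R}^{|\mathcal{C}'|}$ (an optimal Lagrange dual variable for the equality constraint) with $$r_{\mathrm{SDP}}=\inf_{(J,\boldsymbol\lambda,\boldsymbol\nu)\in\mathcal{D}'}\Big(L(\rho^{g}_J,\boldsymbol\nu)+\mathbf{g}^\star\cdot\big(\mathbf{q}^{\mathrm{hon}}-\boldsymbol\Phi[\rho^{t}_J]-\boldsymbol\lambda\big)\Big),$$ where $\mathcal{D}'$ is the set of triples with $J$ a Choi matrix and $-\boldsymbol\nu\le\boldsymbol\lambda\le\boldsymbol\nu$; and for any such $\mathbf{g}^\star$ there is a crossover min-tradeoff function $g^\star$ with gradient $\mathbf{g}^\star$ satisfying $$g^\star(\mathbf{q}^{\mathrm{hon}})-\hat T(\mathbf{g}^\star)\ge r_{\mathrm{SDP}}.$$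
   Context: Let $A,A',B$ be finite-dimensional quantum systems and let $\ket{\xi^g},\ket{\xi^t}$ be pure states on $AA'$. A Choi matrix is an operator $J\ge0$ on $A'B$ with $\operatorname{Tr}_B J=\mathbb{1}_{A'}$ (Choi state of a channel $\mathcal{E}:A'\to B$, acting as $\mathcal{E}(X)=\operatorname{Tr}_{A'}[J(X^T\otimes\mathbb{1}_B)]$). For a Choi matrix $J$ define the states on $AB$ $$\rho^{g}_J=\operatorname{Tr}_{A'}\big[(\mathbb{1}_A\otimes J)(\ket{\xi^g}\!\bra{\xi^g}^{T_{A'}}\otimes\mathbb{1}_B)\big],\quad \rho^{t}_J=\operatorname{Tr}_{A'}\big[(\mathbb{1}_A\otimes J)(\ket{\xi^t}\!\bra{\xi^t}^{T_{A'}}\otimes\mathbb{1}_B)\big].$$ $W$ is a real-valued, nonnegative, convex function of states on $AB$. $\mathcal{C}'$ is a finite alphabet, and $\boldsymbol\Phi[\rho]=(\Phi_c[\rho])_{c\in\mathcal{C}'}$ with $\Phi_c[\rho]=\operatorname{Tr}(P_c\rho)$ for a POVM $\{P_c\}_{c\in\mathcal{C}'}$ on $AB$ (so $\boldsymbol\Phi[\rho]$ is a probability distribution). The crossover rate function is $r_{\mathrm{cross}}(\mathbf{q})=\inf\{W(\rho^{g}_J): J \text{ Choi},\ \boldsymbol\Phi[\rho^{t}_J]=\mathbf{q}\}$ (infimum of the empty set is $+\infty$). A crossover min-tradeoff function is an affine function $g(\mathbf{q})=\mathbf{g}\cdot\mathbf{q}+k_g$ ($\mathbf{g}\in\mathbb{R}^{|\mathcal{C}'|}$,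 $k_g\in\mathbb{R}$) with $g(\mathbf{q})\le r_{\mathrm{cross}}(\mathbf{q})$ for every probability distribution $\mathbf{q}$ on $\mathcal{C}'$. For $\varphi_0>0,\varphi_1\ge0$: $\hat T(\mathbf{g})=\varphi_0(\max(\mathbf{g})-\min(\mathbf{g}))^2+\varphi_1(\max(\mathbf{g})-\min(\mathbf{g}))$; $s(x)=(x-\varphi_1)^2/(4\varphi_0)$ if $x\ge\varphi_1$ and $s(x)=0$ otherwise; $\hat T^*(\boldsymbol\lambda)=s(\|\boldsymbol\lambda\|_1/2)$ if $\sum_c\lambda_c=0$ and $+\infty$ otherwise. *)

theory Defs
  imports Complex_Main "HOL-Library.Extended_Real"
begin

text \<open>Operators on a finite-dimensional Hilbert space with orthonormal basis indexed by
  a finite type 'i are represented as complex matrices 'i => 'i => complex.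
  Composite systems use product index types; the tripartite space is A x A' x B.\<close>

type_synonym 'i cmat = "'i \<Rightarrow> 'i \<Rightarrow> complex"
type_synonym 'i cvec = "'i \<Rightarrow> complex"

definition mmul :: "('i::finite) cmat \<Rightarrow> 'i cmat \<Rightarrow> 'i cmat" where
  "mmul M N = (\<lambda>i k. \<Sum>j\<in>UNIV. M i j * N j k)"

definition eye :: "'i cmat" where
  "eye = (\<lambda>i j. if i = j then 1 else 0)"

definition mtrace :: "('i::finite) cmat \<Rightarrow> complex" where
  "mtrace M = (\<Sum>i\<in>UNIV. M i i)"

definition qform :: "('i::finite) cmat \<Rightarrow> 'i cvec \<Rightarrow> complex" where
  "qform M v = (\<Sum>i\<in>UNIV. \<Sum>j\<in>UNIV. cnj (v i) * M i j * v j)"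

definition psd :: "('i::finite) cmat \<Rightarrow> bool" where
  "psd M \<longleftrightarrow> (\<forall>v. Im (qform M v) = 0 \<and> 0 \<le> Re (qform M v))"

definition density :: "('i::finite) cmat \<Rightarrow> bool" where
  "density \<rho> \<longleftrightarrow> psd \<rho> \<and> mtrace \<rho> = 1"

definition pure_state :: "('i::finite) cvec \<Rightarrow> bool" where
  "pure_state v \<longleftrightarrow> (\<Sum>i\<in>UNIV. cmod (v i) ^ 2) = 1"

definition outer :: "'i cvec \<Rightarrow> 'i cmat" where
  "outer v = (\<lambda>i j. v i * cnj (v j))"

definition kron :: "'i cmat \<Rightarrow> 'j cmat \<Rightarrow> ('i \<times> 'j) cmat" where
  "kron M N = (\<lambda>(i, j) (i', j'). M i i' * N j j')"

definition ptranspose2 :: "('i \<times> 'j) cmat \<Rightarrow> ('i \<times> 'j) cmat" where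
  "ptranspose2 M = (\<lambda>(i, j) (i', j'). M (i, j') (i', j))"

definition ptrace2 :: "('i \<times> ('j::finite)) cmat \<Rightarrow> 'i cmat" where
  "ptrace2 M = (\<lambda>i i'. \<Sum>j\<in>UNIV. M (i, j) (i', j))"

definition reassoc :: "(('a \<times> 'x) \<times> 'b) cmat \<Rightarrow> ('a \<times> 'x \<times> 'b) cmat" where
  "reassoc M = (\<lambda>(a, x, b) (a', x', b'). M ((a, x), b) ((a', x'), b'))"

definition ptrace_mid :: "('a \<times> ('x::finite) \<times> 'b) cmat \<Rightarrow> ('a \<times> 'b) cmat" where
  "ptrace_mid M = (\<lambda>(a, b) (a', b'). \<Sum>x\<in>UNIV. M (a, x, b) (a', x, b'))"

definition choi :: "(('x::finite) \<times> ('b::finite)) cmat \<Rightarrow> bool" where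
  "choi J \<longleftrightarrow> psd J \<and> ptrace2 J = eye"

definition rhoJ :: "('a::finite \<times> 'x::finite) cvec \<Rightarrow> ('x \<times> 'b::finite) cmat \<Rightarrow> ('a \<times> 'b) cmat" where
  "rhoJ xi J = ptrace_mid (mmul (kron (eye :: 'a cmat) J)
                                (reassoc (kron (ptranspose2 (outer xi)) (eye :: 'b cmat))))"

text \<open>Phi_c[rho] = Tr(P_c rho) (real for states and POVM elements; we take the real part).\<close>
definition Phi :: "('c \<Rightarrow> ('i::finite) cmat) \<Rightarrow> 'i cmat \<Rightarrow> 'c \<Rightarrow> real" where
  "Phi P \<rho> = (\<lambda>c. Re (mtrace (mmul (P c) \<rho>)))"

definition povm :: "(('c::finite) \<Rightarrow> ('i::finite) cmat) \<Rightarrow> bool" where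
  "povm P \<longleftrightarrow> (\<forall>c. psd (P c)) \<and> (\<lambda>i j. \<Sum>c\<in>UNIV. P c i j) = eye"

definition prob_dist :: "(('c::finite) \<Rightarrow> real) \<Rightarrow> bool" where
  "prob_dist q \<longleftrightarrow> (\<forall>c. 0 \<le> q c) \<and> (\<Sum>c\<in>UNIV. q c) = 1"

definition dotv :: "(('c::finite) \<Rightarrow> real) \<Rightarrow> ('c \<Rightarrow> real) \<Rightarrow> real" where
  "dotv g q = (\<Sum>c\<in>UNIV. g c * q c)"

definition convex_on_states :: "(('i::finite) cmat \<Rightarrow> real) \<Rightarrow> bool" where
  "convex_on_states W \<longleftrightarrow>
     (\<forall>\<rho> \<sigma> t. density \<rho> \<longrightarrow> density \<sigma> \<longrightarrow> 0 \<le> t \<longrightarrow> t \<le> 1 \<longrightarrow>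
        W (\<lambda>i j. complex_of_real t * \<rho> i j + complex_of_real (1 - t) * \<sigma> i j)
          \<le> t * W \<rho> + (1 - t) * W \<sigma>)"

text \<open>Crossover rate function (Inf of empty set = +infinity).\<close>
definition r_cross ::
  "(('a::finite \<times> 'b::finite) cmat \<Rightarrow> real) \<Rightarrow> ('c \<Rightarrow> ('a \<times> 'b) cmat)
   \<Rightarrow> ('a \<times> 'x::finite) cvec \<Rightarrow> ('a \<times> 'x) cvec \<Rightarrow> ('c \<Rightarrow> real) \<Rightarrow> ereal" where
  "r_cross W P xig xit q =
     Inf {ereal (W (rhoJ xig J)) | J :: ('x \<times> 'b) cmat. choi J \<and> Phi P (rhoJ xit J) = q}"

definition cross_mtf ::
  "(('a::finite \<times> 'b::finite) cmat \<Rightarrow> real) \<Rightarrow> ('c::finite \<Rightarrow> ('a \<times> 'b) cmat)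
   \<Rightarrow> ('a \<times> 'x::finite) cvec \<Rightarrow> ('a \<times> 'x) cvec \<Rightarrow> ('c \<Rightarrow> real) \<Rightarrow> real \<Rightarrow> bool" where
  "cross_mtf W P xig xit g k \<longleftrightarrow>
     (\<forall>q. prob_dist q \<longrightarrow> ereal (dotv g q + k) \<le> r_cross W P xig xit q)"

definition T_hat :: "real \<Rightarrow> real \<Rightarrow> (('c::finite) \<Rightarrow> real) \<Rightarrow> real" where
  "T_hat \<phi>0 \<phi>1 g = \<phi>0 * (Max (range g) - Min (range g))^2 + \<phi>1 * (Max (range g) - Min (range g))"

definition s_fun :: "real \<Rightarrow> real \<Rightarrow> real \<Rightarrow> real" where
  "s_fun \<phi>0 \<phi>1 x = (if x \<ge> \<phi>1 then (x - \<phi>1)^2 / (4 * \<phi>0) else 0)"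

definition T_star :: "real \<Rightarrow> real \<Rightarrow> (('c::finite) \<Rightarrow> real) \<Rightarrow> ereal" where
  "T_star \<phi>0 \<phi>1 lam =
     (if (\<Sum>c\<in>UNIV. lam c) = 0 then ereal (s_fun \<phi>0 \<phi>1 ((\<Sum>c\<in>UNIV. \<bar>lam c\<bar>) / 2)) else \<infinity>)"

definition affine_fun :: "('i cmat \<Rightarrow> ('c \<Rightarrow> real) \<Rightarrow> real) \<Rightarrow> bool" where
  "affine_fun L \<longleftrightarrow>
     (\<forall>\<rho>1 \<rho>2 \<nu>1 \<nu>2 (t::real).
        L (\<lambda>i j. complex_of_real t * \<rho>1 i j + complex_of_real (1 - t) * \<rho>2 i j)
          (\<lambda>c. t * \<nu>1 c + (1 - t) * \<nu>2 c)
        = t * L \<rho>1 \<nu>1 + (1 - t) * L \<rho>2 \<nu>2)"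

end

theory Submission
  imports Defs "HOL-Analysis.Convex_Euclidean_Space" "HOL-Analysis.Finite_Cartesian_Product"
begin


lemma sum_UNIV_pair: "(\<Sum>i\<in>(UNIV::('a::finite\<times>'b::finite) set). f i) = (\<Sum>a\<in>UNIV. \<Sum>b\<in>UNIV. f (a,b))"
  by (simp add: UNIV_Times_UNIV[symmetric] sum.cartesian_product del: UNIV_Times_UNIV)

lemma ifz_mult1: "(if P then (a::complex) else 0) * x = (if P then a * x else 0)" by simp
lemma ifz_mult2: "x * (if P then (a::complex) else 0) = (if P then x * a else 0)" by simp
lemma cnj_ifz: "cnj (if P then (a::complex) else 0) = (if P then cnj a else 0)" by simp

lemma qform_two:
  fixes M :: "('i::finite) cmat"
  assumes "i \<noteq> j"
  shows "qform M (\<lambda>k. (if k = i then \<alpha> else 0) + (if k = j then \<beta> else 0))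
    = cnj \<alpha> * M i i * \<alpha> + cnj \<alpha> * M i j * \<beta> + cnj \<beta> * M j i * \<alpha> + cnj \<beta> * M j j * \<beta>"
  using assms unfolding qform_def
  apply (simp add: distrib_left distrib_right sum.distrib ifz_mult1 ifz_mult2 cnj_ifz sum.delta sum.delta')
  done

lemma qform_one:
  fixes M :: "('i::finite) cmat"
  shows "qform M (\<lambda>k. if k = i then \<alpha> else 0) = cnj \<alpha> * M i i * \<alpha>"
  unfolding qform_def
  by (simp add: ifz_mult1 ifz_mult2 cnj_ifz sum.delta sum.delta')

lemma psd_diag_real: "psd M \<Longrightarrow> Im (M i i) = 0 \<and> 0 \<le> Re (M i i)"
  using qform_one[of M i 1] unfolding psd_def by (metis complex_cnj_one mult_1 mult_1_right)

lemma psd_herm: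
  assumes "psd M" shows "M j i = cnj (M i j)"
proof (cases "i = j")
  case True then show ?thesis using psd_diag_real[OF assms, of i] by (simp add: complex_eq_iff)
next
  case False
  have a: "Im (qform M (\<lambda>k. (if k = i then 1 else 0) + (if k = j then 1 else 0))) = 0"
    using assms unfolding psd_def by blast
  have b: "Im (qform M (\<lambda>k. (if k = i then 1 else 0) + (if k = j then \<i> else 0))) = 0"
    using assms unfolding psd_def by blast
  have di: "Im (M i i) = 0" "Im (M j j) = 0" using psd_diag_real[OF assms] by auto
  from a have a': "Im (M i j) + Im (M j i) = 0" using di by (simp add: qform_two[OF False])
  from b have b': "Re (M i j) - Re (M j i) = 0" using di by (simp add: qform_two[OF False] algebra_simps)
  show ?thesis using a' b' by (simp add: complex_eq_iff)
qed

lemma sum_if_const: "(\<Sum>j\<in>A. if P then f j else (0::'b::comm_monoid_add)) = (if P then \<Sum>j\<in>A. f j else 0)" by auto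

lemma qform_shift:
  fixes M :: "('i::finite) cmat"
  shows "qform M (\<lambda>k. x k + (if k = i then z else 0)) =
     qform M x + cnj z * (\<Sum>l\<in>UNIV. M i l * x l) + (\<Sum>k\<in>UNIV. cnj (x k) * M k i) * z + cnj z * M i i * z"
  unfolding qform_def
  apply (simp add: distrib_left distrib_right sum.distrib ifz_mult1 ifz_mult2 cnj_ifz sum.delta sum.delta' sum_if_const)
  apply (simp add: sum_distrib_left sum_distrib_right algebra_simps)
  done

lemma psd_cs:
  fixes B :: "('i::finite) cmat"
  assumes psd: "psd B"
  shows "(cmod (\<Sum>l\<in>UNIV. B i l * x l))^2 \<le> Re (B i i) * Re (qform B x)"
proof -
  define w where "w = (\<Sum>l\<in>UNIV. B i l * x l)"
  define b where "b = Re (B i i)"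
  define Q where "Q = Re (qform B x)"
  have Bii: "B i i = complex_of_real b" using psd_diag_real[OF psd, of i] unfolding b_def by (simp add: complex_eq_iff)
  have b0: "0 \<le> b" using psd_diag_real[OF psd, of i] unfolding b_def by simp
  have cw: "(\<Sum>k\<in>UNIV. cnj (x k) * B k i) = cnj w"
    unfolding w_def cnj_sum by (simp add: psd_herm[OF psd, of _ i] mult.commute)
  have key: "0 \<le> Q - 2 * t * (cmod w)^2 + t^2 * (cmod w)^2 * b" for t :: real
  proof -
    define z where "z = - complex_of_real t * w"
    have cm: "cmod w * cmod w = Re w * Re w + Im w * Im w" using cmod_power2[of w] by (simp add: power2_eq_square)
    have "0 \<le> Re (qform B (\<lambda>k. x k + (if k = i then z else 0)))" using psd unfolding psd_def by blast
    also have "\<dots> = Q - 2 * t * (cmod w)^2 + t^2 * (cmod w)^2 * b"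
      unfolding qform_shift cw Bii z_def Q_def w_def[symmetric]
      by (simp add: cm algebra_simps power2_eq_square)
    finally show ?thesis .
  qed
  show ?thesis
  proof (cases "b = 0")
    case True
    have "(cmod w)^2 = 0"
    proof (rule ccontr)
      assume ne: "(cmod w)^2 \<noteq> 0"
      hence pos: "(cmod w)^2 > 0" by simp
      have "0 \<le> Q - 2 * ((\<bar>Q\<bar> + 1) / (2 * (cmod w)^2)) * (cmod w)^2" using key[of "(\<bar>Q\<bar> + 1) / (2 * (cmod w)^2)"] True by simp
      also have "\<dots> = Q - (\<bar>Q\<bar> + 1)" using pos by (simp add: field_simps)
      finally show False by linarith
    qed
    then show ?thesis using True unfolding w_def b_def by simp
  next
    case False
    hence bp: "b > 0" using b0 by simp
    have "0 \<le> Q - 2 * (1/b) * (cmod w)^2 + (1/b)^2 * (cmod w)^2 * b" using key by blast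
    also have "\<dots> = Q - (cmod w)^2 / b" using bp by (simp add: field_simps power2_eq_square)
    finally have "(cmod w)^2 / b \<le> Q" by simp
    hence "(cmod w)^2 \<le> b * Q" using bp by (simp add: field_simps)
    then show ?thesis unfolding w_def b_def Q_def .
  qed
qed

lemma psd_row_zero:
  fixes B :: "('i::finite) cmat"
  assumes psd: "psd B" and z: "B j j = 0"
  shows "B j k = 0"
proof -
  have "(cmod (\<Sum>l\<in>UNIV. B j l * (if l = k then 1 else 0)))^2 \<le> Re (B j j) * Re (qform B (\<lambda>l. if l = k then 1 else 0))"
    by (rule psd_cs[OF psd])
  then have "(cmod (B j k))^2 \<le> 0" using z by (simp add: ifz_mult2 sum.delta')
  then show ?thesis by simp
qed

lemma trace_step:
  fixes A B :: "('i::finite) cmat"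
  assumes psdA: "psd A" and psd: "psd B" and Bi: "B i i \<noteq> 0"
  defines "v \<equiv> (\<lambda>j. B j i / complex_of_real (sqrt (Re (B i i))))"
  defines "B' \<equiv> (\<lambda>j k. B j k - v j * cnj (v k))"
  shows "psd B'" "{j. B' j j \<noteq> 0} \<subseteq> {j. B j j \<noteq> 0} - {i}"
    "Re (\<Sum>j\<in>UNIV. \<Sum>k\<in>UNIV. A j k * B k j) = Re (\<Sum>j\<in>UNIV. \<Sum>k\<in>UNIV. A j k * B' k j) + Re (qform A v)"
proof -
  define b where "b = Re (B i i)"
  have Bii: "B i i = complex_of_real b" using psd_diag_real[OF psd, of i] unfolding b_def by (simp add: complex_eq_iff)
  have bn: "b \<noteq> 0" using Bi Bii by auto
  have bp: "b > 0" using psd_diag_real[OF psd, of i] bn unfolding b_def by linarith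
  have sb: "sqrt b * sqrt b = b" using bp by simp
  have vdef: "v j = B j i / complex_of_real (sqrt b)" for j unfolding v_def b_def ..
  show "psd B'"
    unfolding psd_def
  proof
    fix x
    define w where "w = (\<Sum>l\<in>UNIV. B i l * x l)"
    have s1: "(\<Sum>j\<in>UNIV. cnj (x j) * v j) = cnj w / complex_of_real (sqrt b)"
      unfolding w_def vdef cnj_sum by (simp add: psd_herm[OF psd, of _ i] sum_divide_distrib mult.commute)
    have s2: "(\<Sum>k\<in>UNIV. cnj (v k) * x k) = w / complex_of_real (sqrt b)"
      unfolding w_def vdef by (simp add: psd_herm[OF psd, of i] sum_divide_distrib)
    have "qform B' x = qform B x - (\<Sum>j\<in>UNIV. cnj (x j) * v j) * (\<Sum>k\<in>UNIV. cnj (v k) * x k)"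
      unfolding qform_def B'_def
      apply (simp add: algebra_simps sum_subtractf sum_distrib_left sum_distrib_right)
      by (rule sum.swap)
    also have "\<dots> = qform B x - complex_of_real ((cmod w)^2 / b)"
      unfolding s1 s2 using bp sb
      apply (simp add: complex_norm_square field_simps mult.commute flip: of_real_mult)
      by (simp add: complex_norm_square flip: of_real_power)
    finally have q: "qform B' x = qform B x - complex_of_real ((cmod w)^2 / b)" .
    have cs: "(cmod w)^2 \<le> b * Re (qform B x)" using psd_cs[OF psd, of i x] unfolding w_def b_def .
    have "(cmod w)^2 / b \<le> Re (qform B x)" using cs bp by (simp add: field_simps)
    then show "Im (qform B' x) = 0 \<and> 0 \<le> Re (qform B' x)" using psd unfolding q psd_def by simp
  qed
  show "{j. B' j j \<noteq> 0} \<subseteq> {j. B j j \<noteq> 0} - {i}"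
  proof
    fix j assume j: "j \<in> {j. B' j j \<noteq> 0}"
    have "B' i i = 0" unfolding B'_def vdef Bii using bp sb
      by (simp add: field_simps flip: of_real_mult)
    moreover have "B j j \<noteq> 0"
    proof
      assume z: "B j j = 0"
      have "B j i = 0" by (rule psd_row_zero[OF psd z])
      then have "B' j j = 0" unfolding B'_def vdef using z by simp
      then show False using j by simp
    qed
    ultimately show "j \<in> {j. B j j \<noteq> 0} - {i}" using j by auto
  qed
  show "Re (\<Sum>j\<in>UNIV. \<Sum>k\<in>UNIV. A j k * B k j) = Re (\<Sum>j\<in>UNIV. \<Sum>k\<in>UNIV. A j k * B' k j) + Re (qform A v)"
  proof -
    have "(\<Sum>j\<in>UNIV. \<Sum>k\<in>UNIV. A j k * B k j) = (\<Sum>j\<in>UNIV. \<Sum>k\<in>UNIV. A j k * B' k j) + qform A v"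
      unfolding qform_def B'_def
      by (simp add: algebra_simps sum.distrib sum_subtractf)
    then show ?thesis by simp
  qed
qed

lemma trace_psd_aux:
  fixes A :: "('i::finite) cmat"
  assumes psdA: "psd A"
  shows "\<forall>B. psd B \<longrightarrow> card {j. B j j \<noteq> 0} \<le> n \<longrightarrow> 0 \<le> Re (\<Sum>j\<in>UNIV. \<Sum>k\<in>UNIV. A j k * B k j)"
proof (induction n)
  case 0
  show ?case
  proof (intro allI impI)
    fix B :: "'i cmat" assume psd: "psd B" and c: "card {j. B j j \<noteq> 0} \<le> 0"
    have "{j. B j j \<noteq> 0} = {}" using c by simp
    then have "B k j = 0" for k j using psd_row_zero[OF psd] by blast
    then show "0 \<le> Re (\<Sum>j\<in>UNIV. \<Sum>k\<in>UNIV. A j k * B k j)" by simp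
  qed
next
  case (Suc n)
  show ?case
  proof (intro allI impI)
    fix B :: "'i cmat" assume psd: "psd B" and c: "card {j. B j j \<noteq> 0} \<le> Suc n"
    show "0 \<le> Re (\<Sum>j\<in>UNIV. \<Sum>k\<in>UNIV. A j k * B k j)"
    proof (cases "{j. B j j \<noteq> 0} = {}")
      case True
      then have "B k j = 0" for k j using psd_row_zero[OF psd] by blast
      then show ?thesis by simp
    next
      case False
      then obtain i where i: "B i i \<noteq> 0" by auto
      note st = trace_step[OF psdA psd i]
      define B' where "B' = (\<lambda>j k. B j k - B j i / complex_of_real (sqrt (Re (B i i))) * cnj (B k i / complex_of_real (sqrt (Re (B i i)))))"
      have p': "psd B'" using st(1) unfolding B'_def .
      have sub: "{j. B' j j \<noteq> 0} \<subseteq> {j. B j j \<noteq> 0} - {i}" using st(2) unfolding B'_def .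
      have "card {j. B' j j \<noteq> 0} \<le> card ({j. B j j \<noteq> 0} - {i})" by (rule card_mono[OF _ sub]) simp
      also have "\<dots> = card {j. B j j \<noteq> 0} - 1" using i by (simp add: card_Diff_singleton)
      finally have "card {j. B' j j \<noteq> 0} \<le> n" using c by linarith
      then have "0 \<le> Re (\<Sum>j\<in>UNIV. \<Sum>k\<in>UNIV. A j k * B' k j)" using Suc.IH p' by blast
      moreover have "0 \<le> Re (qform A (\<lambda>j. B j i / complex_of_real (sqrt (Re (B i i)))))" using psdA unfolding psd_def by blast
      ultimately show ?thesis using st(3) unfolding B'_def by linarith
    qed
  qed
qed

lemma trace_psd_nonneg:
  fixes A B :: "('i::finite) cmat"
  assumes "psd A" "psd B"
  shows "0 \<le> Re (\<Sum>j\<in>UNIV. \<Sum>k\<in>UNIV. A j k * B k j)"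
  using trace_psd_aux[OF assms(1), of "card {j. B j j \<noteq> 0}"] assms(2) by blast

lemma rhoJ_eq:
  fixes xi :: "('a::finite \<times> 'x::finite) cvec" and J :: "('x \<times> 'b::finite) cmat"
  shows "rhoJ xi J (a,b) (a',b') = (\<Sum>x\<in>UNIV. \<Sum>y\<in>UNIV. xi (a,x) * J (x,b) (y,b') * cnj (xi (a',y)))"
  unfolding rhoJ_def ptrace_mid_def mmul_def kron_def reassoc_def ptranspose2_def outer_def eye_def
  apply (simp add: sum_UNIV_pair ifz_mult1 ifz_mult2 sum.delta sum.delta' sum_if_const)
  apply (simp add: algebra_simps)
  done

lemma sum6_perm:
  fixes F :: "'a::finite \<Rightarrow> 'b::finite \<Rightarrow> 'a::finite \<Rightarrow> 'b::finite \<Rightarrow> 'x::finite \<Rightarrow> 'x::finite \<Rightarrow> 'r::comm_monoid_add"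
  shows "(\<Sum>a\<in>UNIV. \<Sum>b\<in>UNIV. \<Sum>a2\<in>UNIV. \<Sum>b2\<in>UNIV. \<Sum>x\<in>UNIV. \<Sum>y\<in>UNIV. F a b a2 b2 x y) = (\<Sum>x\<in>UNIV. \<Sum>b\<in>UNIV. \<Sum>y\<in>UNIV. \<Sum>b2\<in>UNIV. \<Sum>a2\<in>UNIV. \<Sum>a\<in>UNIV. F a b a2 b2 x y)"
proof -
  have "(\<Sum>a\<in>UNIV. \<Sum>b\<in>UNIV. \<Sum>a2\<in>UNIV. \<Sum>b2\<in>UNIV. \<Sum>x\<in>UNIV. \<Sum>y\<in>UNIV. F a b a2 b2 x y) = (\<Sum>a\<in>UNIV. \<Sum>b\<in>UNIV. \<Sum>a2\<in>UNIV. \<Sum>x\<in>UNIV. \<Sum>b2\<in>UNIV. \<Sum>y\<in>UNIV. F a b a2 b2 x y)"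
    apply (rule sum.cong[OF refl]) apply (rule sum.cong[OF refl]) apply (rule sum.cong[OF refl]) by (rule sum.swap)
  also have "\<dots> = (\<Sum>a\<in>UNIV. \<Sum>b\<in>UNIV. \<Sum>x\<in>UNIV. \<Sum>a2\<in>UNIV. \<Sum>b2\<in>UNIV. \<Sum>y\<in>UNIV. F a b a2 b2 x y)"
    apply (rule sum.cong[OF refl]) apply (rule sum.cong[OF refl]) by (rule sum.swap)
  also have "\<dots> = (\<Sum>a\<in>UNIV. \<Sum>x\<in>UNIV. \<Sum>b\<in>UNIV. \<Sum>a2\<in>UNIV. \<Sum>b2\<in>UNIV. \<Sum>y\<in>UNIV. F a b a2 b2 x y)"
    apply (rule sum.cong[OF refl]) by (rule sum.swap)
  also have "\<dots> = (\<Sum>x\<in>UNIV. \<Sum>a\<in>UNIV. \<Sum>b\<in>UNIV. \<Sum>a2\<in>UNIV. \<Sum>b2\<in>UNIV. \<Sum>y\<in>UNIV. F a b a2 b2 x y)"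
    by (rule sum.swap)
  also have "\<dots> = (\<Sum>x\<in>UNIV. \<Sum>b\<in>UNIV. \<Sum>a\<in>UNIV. \<Sum>a2\<in>UNIV. \<Sum>b2\<in>UNIV. \<Sum>y\<in>UNIV. F a b a2 b2 x y)"
    apply (rule sum.cong[OF refl]) by (rule sum.swap)
  also have "\<dots> = (\<Sum>x\<in>UNIV. \<Sum>b\<in>UNIV. \<Sum>a\<in>UNIV. \<Sum>a2\<in>UNIV. \<Sum>y\<in>UNIV. \<Sum>b2\<in>UNIV. F a b a2 b2 x y)"
    apply (rule sum.cong[OF refl]) apply (rule sum.cong[OF refl]) apply (rule sum.cong[OF refl]) apply (rule sum.cong[OF refl]) by (rule sum.swap)
  also have "\<dots> = (\<Sum>x\<in>UNIV. \<Sum>b\<in>UNIV. \<Sum>a\<in>UNIV. \<Sum>y\<in>UNIV. \<Sum>a2\<in>UNIV. \<Sum>b2\<in>UNIV. F a b a2 b2 x y)"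
    apply (rule sum.cong[OF refl]) apply (rule sum.cong[OF refl]) apply (rule sum.cong[OF refl]) by (rule sum.swap)
  also have "\<dots> = (\<Sum>x\<in>UNIV. \<Sum>b\<in>UNIV. \<Sum>y\<in>UNIV. \<Sum>a\<in>UNIV. \<Sum>a2\<in>UNIV. \<Sum>b2\<in>UNIV. F a b a2 b2 x y)"
    apply (rule sum.cong[OF refl]) apply (rule sum.cong[OF refl]) by (rule sum.swap)
  also have "\<dots> = (\<Sum>x\<in>UNIV. \<Sum>b\<in>UNIV. \<Sum>y\<in>UNIV. \<Sum>a\<in>UNIV. \<Sum>b2\<in>UNIV. \<Sum>a2\<in>UNIV. F a b a2 b2 x y)"
    apply (rule sum.cong[OF refl]) apply (rule sum.cong[OF refl]) apply (rule sum.cong[OF refl]) apply (rule sum.cong[OF refl]) by (rule sum.swap)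
  also have "\<dots> = (\<Sum>x\<in>UNIV. \<Sum>b\<in>UNIV. \<Sum>y\<in>UNIV. \<Sum>b2\<in>UNIV. \<Sum>a\<in>UNIV. \<Sum>a2\<in>UNIV. F a b a2 b2 x y)"
    apply (rule sum.cong[OF refl]) apply (rule sum.cong[OF refl]) apply (rule sum.cong[OF refl]) by (rule sum.swap)
  also have "\<dots> = (\<Sum>x\<in>UNIV. \<Sum>b\<in>UNIV. \<Sum>y\<in>UNIV. \<Sum>b2\<in>UNIV. \<Sum>a2\<in>UNIV. \<Sum>a\<in>UNIV. F a b a2 b2 x y)"
    apply (rule sum.cong[OF refl]) apply (rule sum.cong[OF refl]) apply (rule sum.cong[OF refl]) apply (rule sum.cong[OF refl]) by (rule sum.swap)
  finally show ?thesis .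
qed


lemma rhoJ_psd:
  fixes xi :: "('a::finite \<times> 'x::finite) cvec" and J :: "('x \<times> 'b::finite) cmat"
  assumes "psd J" shows "psd (rhoJ xi J)"
  unfolding psd_def
proof
  fix v :: "('a \<times> 'b) cvec"
  define w where "w = (\<lambda>(x,b). \<Sum>a\<in>UNIV. v (a,b) * cnj (xi (a,x)))"
  define T where "T = (\<lambda>a b a2 b2 x y. cnj (v (a,b)) * xi (a,x) * J (x,b) (y,b2) * cnj (xi (a2,y)) * v (a2,b2))"
  have l: "qform (rhoJ xi J) v = (\<Sum>a\<in>UNIV. \<Sum>b\<in>UNIV. \<Sum>a2\<in>UNIV. \<Sum>b2\<in>UNIV. \<Sum>x\<in>UNIV. \<Sum>y\<in>UNIV. T a b a2 b2 x y)"
    unfolding qform_def sum_UNIV_pair rhoJ_eq T_def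
    by (simp add: sum_distrib_left sum_distrib_right mult.assoc)
  have r: "qform J w = (\<Sum>x\<in>UNIV. \<Sum>b\<in>UNIV. \<Sum>y\<in>UNIV. \<Sum>b2\<in>UNIV. \<Sum>a2\<in>UNIV. \<Sum>a\<in>UNIV. T a b a2 b2 x y)"
    unfolding qform_def sum_UNIV_pair w_def T_def
    apply (simp add: sum_distrib_left sum_distrib_right cnj_sum)
    apply (intro sum.cong refl)
    by (simp add: mult_ac)
  have "qform (rhoJ xi J) v = qform J w" unfolding l r by (rule sum6_perm)
  then show "Im (qform (rhoJ xi J) v) = 0 \<and> 0 \<le> Re (qform (rhoJ xi J) v)" using assms unfolding psd_def by simp
qed

definition comb :: "real \<Rightarrow> 'i cmat \<Rightarrow> 'i cmat \<Rightarrow> 'i cmat" where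
  "comb t A B = (\<lambda>i j. complex_of_real t * A i j + complex_of_real (1 - t) * B i j)"

lemma cmod_sq_cnj: "(complex_of_real (cmod z))^2 = z * cnj z"
  by (simp add: complex_norm_square flip: of_real_power)

lemma rhoJ_trace:
  fixes xi :: "('a::finite \<times> 'x::finite) cvec" and J :: "('x \<times> 'b::finite) cmat"
  assumes "choi J" "pure_state xi"
  shows "mtrace (rhoJ xi J) = 1"
proof -
  have pt: "(\<Sum>b\<in>UNIV. J (x,b) (y,b)) = eye x y" for x y
  proof -
    have "ptrace2 J x y = eye x y" using assms(1) unfolding choi_def by simp
    then show ?thesis unfolding ptrace2_def by simp
  qed
  have "mtrace (rhoJ xi J) = (\<Sum>a\<in>UNIV. \<Sum>b\<in>UNIV. \<Sum>x\<in>UNIV. \<Sum>y\<in>UNIV. xi (a,x) * J (x,b) (y,b) * cnj (xi (a,y)))"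
    unfolding mtrace_def sum_UNIV_pair rhoJ_eq by simp
  also have "\<dots> = (\<Sum>a\<in>UNIV. \<Sum>x\<in>UNIV. \<Sum>b\<in>UNIV. \<Sum>y\<in>UNIV. xi (a,x) * J (x,b) (y,b) * cnj (xi (a,y)))"
    by (rule sum.cong[OF refl], rule sum.swap)
  also have "\<dots> = (\<Sum>a\<in>UNIV. \<Sum>x\<in>UNIV. \<Sum>y\<in>UNIV. \<Sum>b\<in>UNIV. xi (a,x) * J (x,b) (y,b) * cnj (xi (a,y)))"
    by (rule sum.cong[OF refl], rule sum.cong[OF refl], rule sum.swap)
  also have "\<dots> = (\<Sum>a\<in>UNIV. \<Sum>x\<in>UNIV. \<Sum>y\<in>UNIV. xi (a,x) * (\<Sum>b\<in>UNIV. J (x,b) (y,b)) * cnj (xi (a,y)))"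
    by (simp only: sum_distrib_left sum_distrib_right)
  also have "\<dots> = (\<Sum>a\<in>UNIV. \<Sum>x\<in>UNIV. complex_of_real ((cmod (xi (a,x)))^2))"
    unfolding pt eye_def
    by (simp add: ifz_mult1 ifz_mult2 sum.delta sum.delta' cmod_sq_cnj)
  also have "\<dots> = complex_of_real (\<Sum>i\<in>UNIV. (cmod (xi i))^2)"
    by (simp add: sum_UNIV_pair)
  also have "\<dots> = 1" using assms(2) unfolding pure_state_def by simp
  finally show ?thesis .
qed

lemma rhoJ_density:
  fixes xi :: "('a::finite \<times> 'x::finite) cvec" and J :: "('x \<times> 'b::finite) cmat"
  assumes "choi J" "pure_state xi"
  shows "Defs.density (rhoJ xi J)"
  using rhoJ_trace[OF assms] rhoJ_psd assms(1) unfolding Defs.density_def choi_def by blast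

lemma Phi_prob:
  fixes P :: "'c::finite \<Rightarrow> ('i::finite) cmat"
  assumes "povm P" "Defs.density \<rho>"
  shows "prob_dist (Phi P \<rho>)"
  unfolding prob_dist_def
proof
  show "\<forall>c. 0 \<le> Phi P \<rho> c"
    using assms trace_psd_nonneg unfolding povm_def Defs.density_def Phi_def mtrace_def mmul_def by blast
  have e: "(\<Sum>c\<in>UNIV. P c i j) = eye i j" for i j
  proof -
    have "(\<lambda>i j. \<Sum>c\<in>UNIV. P c i j) = eye" using assms(1) unfolding povm_def by simp
    from fun_cong[OF fun_cong[OF this], of i j] show ?thesis by simp
  qed
  have "(\<Sum>c\<in>UNIV. Phi P \<rho> c) = Re (\<Sum>c\<in>UNIV. \<Sum>i\<in>UNIV. \<Sum>j\<in>UNIV. P c i j * \<rho> j i)"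
    unfolding Phi_def mtrace_def mmul_def by (simp flip: Re_sum)
  also have "(\<Sum>c\<in>UNIV. \<Sum>i\<in>UNIV. \<Sum>j\<in>UNIV. P c i j * \<rho> j i) = (\<Sum>i\<in>UNIV. \<Sum>c\<in>UNIV. \<Sum>j\<in>UNIV. P c i j * \<rho> j i)"
    by (rule sum.swap)
  also have "\<dots> = (\<Sum>i\<in>UNIV. \<Sum>j\<in>UNIV. \<Sum>c\<in>UNIV. P c i j * \<rho> j i)"
    by (rule sum.cong[OF refl], rule sum.swap)
  also have "\<dots> = (\<Sum>i\<in>UNIV. \<Sum>j\<in>UNIV. (\<Sum>c\<in>UNIV. P c i j) * \<rho> j i)"
    by (simp add: sum_distrib_right)
  also have "\<dots> = mtrace \<rho>" unfolding e eye_def mtrace_def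
    by (simp add: ifz_mult1 sum.delta)
  also have "Re \<dots> = 1" using assms(2) unfolding Defs.density_def by simp
  finally show "(\<Sum>c\<in>UNIV. Phi P \<rho> c) = 1" .
qed

lemma rhoJ_lin:
  fixes xi :: "('a::finite \<times> 'x::finite) cvec" and J1 J2 :: "('x \<times> 'b::finite) cmat"
  shows "rhoJ xi (\<lambda>i j. complex_of_real t * J1 i j + complex_of_real u * J2 i j)
     = (\<lambda>i j. complex_of_real t * rhoJ xi J1 i j + complex_of_real u * rhoJ xi J2 i j)"
  apply (rule ext, rule ext)
  subgoal for p q
    apply (cases p, cases q)
    by (simp add: rhoJ_eq algebra_simps sum.distrib sum_distrib_left)
  done

lemma rhoJ_comb: "rhoJ xi (comb t J1 J2) = comb t (rhoJ xi J1) (rhoJ xi J2)"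
  unfolding comb_def by (rule rhoJ_lin)

lemma Phi_lin:
  "Phi P (\<lambda>i j. complex_of_real t * A i j + complex_of_real u * B i j) c = t * Phi P A c + u * Phi P B c"
proof -
  have "(\<Sum>i\<in>UNIV. \<Sum>j\<in>UNIV. P c i j * (complex_of_real t * A j i + complex_of_real u * B j i))
     = complex_of_real t * (\<Sum>i\<in>UNIV. \<Sum>j\<in>UNIV. P c i j * A j i) + complex_of_real u * (\<Sum>i\<in>UNIV. \<Sum>j\<in>UNIV. P c i j * B j i)"
    by (simp add: algebra_simps sum.distrib sum_distrib_left)
  then show ?thesis unfolding Phi_def mtrace_def mmul_def by simp
qed

lemma Phi_comb: "Phi P (comb t A B) c = t * Phi P A c + (1 - t) * Phi P B c"
  unfolding comb_def by (rule Phi_lin)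

lemma choi_comb:
  fixes J1 J2 :: "('x::finite \<times> 'b::finite) cmat"
  assumes "choi J1" "choi J2" "0 \<le> t" "t \<le> 1"
  shows "choi (comb t J1 J2)"
proof -
  have q: "qform (\<lambda>i j. complex_of_real t * J1 i j + complex_of_real u * J2 i j) v = complex_of_real t * qform J1 v + complex_of_real u * qform J2 v" for v u
    unfolding qform_def by (simp add: algebra_simps sum.distrib sum_distrib_left)
  have "psd (comb t J1 J2)" unfolding psd_def comb_def q using assms unfolding choi_def psd_def by simp
  moreover have "ptrace2 (comb t J1 J2) = eye"
  proof -
    have "ptrace2 (comb t J1 J2) = comb t (ptrace2 J1) (ptrace2 J2)"
      unfolding ptrace2_def comb_def by (simp add: sum.distrib sum_distrib_left)
    then show ?thesis using assms unfolding choi_def comb_def eye_def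
      by (auto simp flip: distrib_right of_real_add)
  qed
  ultimately show ?thesis unfolding choi_def by simp
qed

lemma choi_exists: "\<exists>J :: ('x::finite \<times> 'b::finite) cmat. choi J"
proof -
  define n where "n = real (card (UNIV :: 'b set))"
  have np: "n > 0" unfolding n_def by simp
  define J where "J = (\<lambda>(p::'x\<times>'b) q. if p = q then complex_of_real (1/n) else 0)"
  have q: "qform J v = (\<Sum>p\<in>UNIV. cnj (v p) * complex_of_real (1/n) * v p)" for v
    unfolding qform_def J_def by (simp add: ifz_mult1 ifz_mult2 sum.delta')
  have pt: "cnj z * complex_of_real (1/n) * z = complex_of_real ((cmod z)^2 / n)" for z
  proof -
    have "cnj z * complex_of_real (1/n) * z = complex_of_real (1/n) * (z * cnj z)" by (simp add: mult_ac)
    also have "\<dots> = complex_of_real (1/n) * complex_of_real ((cmod z)^2)" by (simp only: complex_norm_square)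
    also have "\<dots> = complex_of_real ((cmod z)^2 / n)" by (simp only: of_real_mult[symmetric]) simp
    finally show ?thesis .
  qed
  have "psd J"
    unfolding psd_def q pt using np by (simp add: Re_sum Im_sum sum_nonneg)
  moreover have c1: "complex_of_nat CARD('b) * complex_of_real (1/n) = 1"
  proof -
    have "complex_of_nat CARD('b) = complex_of_real n" unfolding n_def by simp
    moreover have "complex_of_real n * complex_of_real (1/n) = 1" using np by (simp flip: of_real_mult)
    ultimately show ?thesis by simp
  qed
  moreover have "ptrace2 J = eye"
    unfolding ptrace2_def J_def eye_def using c1 by (auto simp: fun_eq_iff)
  ultimately show ?thesis unfolding choi_def by blast
qed



lemma lagrange_sep:
  fixes f :: "'d \<Rightarrow> real" and U :: "'d \<Rightarrow> 'c::finite \<Rightarrow> real" and p :: real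
  assumes conv: "\<And>d1 d2 t. d1 \<in> D \<Longrightarrow> d2 \<in> D \<Longrightarrow> 0 \<le> t \<Longrightarrow> t \<le> 1 \<Longrightarrow>
      \<exists>d\<in>D. U d = (\<lambda>c. t * U d1 c + (1 - t) * U d2 c) \<and> f d \<le> t * f d1 + (1 - t) * f d2"
    and surj: "\<And>u. \<exists>d\<in>D. U d = u"
    and feas: "\<And>d. d \<in> D \<Longrightarrow> U d = (\<lambda>c. 0) \<Longrightarrow> p \<le> f d"
  shows "\<exists>g. \<forall>d\<in>D. p \<le> f d + dotv g (U d)"
proof -
  define S :: "((real^'c) \<times> real) set" where
    "S = {((\<chi> c. U d c), r - p) | d r. d \<in> D \<and> f d < r}"
  have "convex S"
    unfolding convex_def
  proof (intro ballI allI impI)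
    fix x y and u v :: real
    assume xS: "x \<in> S" and yS: "y \<in> S" and u: "0 \<le> u" and v: "0 \<le> v" and uv: "u + v = 1"
    obtain d1 r1 where x: "x = ((\<chi> c. U d1 c), r1 - p)" "d1 \<in> D" "f d1 < r1" using xS unfolding S_def by blast
    obtain d2 r2 where y: "y = ((\<chi> c. U d2 c), r2 - p)" "d2 \<in> D" "f d2 < r2" using yS unfolding S_def by blast
    have v': "v = 1 - u" using uv by simp
    obtain d where d: "d \<in> D" "U d = (\<lambda>c. u * U d1 c + (1 - u) * U d2 c)" "f d \<le> u * f d1 + (1 - u) * f d2"
      using conv[OF x(2) y(2) u] uv v by fastforce
    have "u * f d1 + (1 - u) * f d2 < u * r1 + (1 - u) * r2"
    proof (cases "u = 0")
      case True then show ?thesis using y by simp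
    next
      case False then have "u > 0" using u by simp
      then have "u * f d1 < u * r1" using x by simp
      moreover have "(1 - u) * f d2 \<le> (1 - u) * r2" using y v' v by (simp add: mult_left_mono)
      ultimately show ?thesis by linarith
    qed
    then have "f d < u * r1 + (1 - u) * r2" using d by linarith
    moreover have "u *\<^sub>R x + v *\<^sub>R y = ((\<chi> c. U d c), (u * r1 + (1 - u) * r2) - p)"
      unfolding x y v' d(2) by (simp add: vec_eq_iff algebra_simps)
    ultimately show "u *\<^sub>R x + v *\<^sub>R y \<in> S" unfolding S_def using d(1) by blast
  qed
  moreover have "0 \<notin> S"
  proof
    assume "0 \<in> S"
    then obtain d r where "0 = ((\<chi> c. U d c), r - p)" "d \<in> D" "f d < r" unfolding S_def by blast
    then have "U d = (\<lambda>c. 0)" "r = p" by (auto simp: vec_eq_iff zero_prod_def)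
    then show False using feas[OF \<open>d \<in> D\<close>] \<open>f d < r\<close> by simp
  qed
  ultimately obtain a where a: "a \<noteq> 0" "\<forall>x\<in>S. 0 \<le> inner a x"
    using separating_hyperplane_set_0 by blast
  obtain av ar where aeq: "a = (av, ar)" by (cases a)
  define ip where "ip = (\<lambda>w::'c \<Rightarrow> real. \<Sum>c\<in>UNIV. av $ c * w c)"
  have star: "0 \<le> ip (U d) + ar * (r - p)" if "d \<in> D" "f d < r" for d r
  proof -
    have "((\<chi> c. U d c), r - p) \<in> S" unfolding S_def using that by blast
    then have "0 \<le> inner (av, ar) ((\<chi> c. U d c), r - p)" using a(2) unfolding aeq by blast
    then show ?thesis unfolding ip_def by (simp add: inner_vec_def inner_Pair)
  qed
  obtain d0 where d0: "d0 \<in> D" "U d0 = (\<lambda>c. 0)" using surj by blast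
  have ar0: "0 \<le> ar"
  proof -
    have "0 \<le> ip (U d0) + ar * ((max (f d0) p + 1) - p)" by (rule star[OF d0(1)]) simp
    then have "0 \<le> ar * ((max (f d0) p + 1) - p)" using d0(2) unfolding ip_def by simp
    moreover have "(max (f d0) p + 1) - p > 0" by simp
    ultimately show ?thesis by (simp add: zero_le_mult_iff)
  qed
  have arne: "ar \<noteq> 0"
  proof
    assume ar: "ar = 0"
    obtain d where d: "d \<in> D" "U d = (\<lambda>c. - (av $ c))" using surj by blast
    have "0 \<le> ip (U d)" using star[OF d(1), of "f d + 1"] ar by simp
    then have "(\<Sum>c\<in>UNIV. (av $ c)^2) \<le> 0" unfolding ip_def d(2) by (simp add: power2_eq_square sum_negf)
    moreover have "0 \<le> (\<Sum>c\<in>UNIV. (av $ c)^2)" by (rule sum_nonneg) simp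
    ultimately have "(\<Sum>c\<in>UNIV. (av $ c)^2) = 0" by linarith
    then have "\<forall>c\<in>UNIV. (av $ c)^2 = 0" using sum_nonneg_eq_0_iff[of UNIV "\<lambda>c. (av $ c)^2"] by simp
    then have "av = 0" by (simp add: vec_eq_iff)
    then show False using a(1) ar aeq by (simp add: zero_prod_def)
  qed
  then have arp: "ar > 0" using ar0 by simp
  define g where "g = (\<lambda>c. av $ c / ar)"
  have "p \<le> f d + dotv g (U d)" if d: "d \<in> D" for d
  proof -
    have dg: "dotv g (U d) = ip (U d) / ar" unfolding dotv_def g_def ip_def by (simp add: sum_divide_distrib)
    have "p - f d \<le> ip (U d) / ar + e" if e: "0 < e" for e
    proof -
      have "0 \<le> ip (U d) + ar * ((f d + e) - p)" by (rule star[OF d]) (use e in simp)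
      then have "ar * (p - f d) \<le> ip (U d) + ar * e" by (simp add: algebra_simps)
      then show "p - f d \<le> ip (U d) / ar + e" using arp by (simp add: field_simps)
    qed
    then have "p - f d \<le> ip (U d) / ar" by (rule field_le_epsilon)
    then show ?thesis unfolding dg by simp
  qed
  then show ?thesis by blast
qed



lemma s_fun_alt: "\<phi>0 > 0 \<Longrightarrow> s_fun \<phi>0 \<phi>1 x = (max (x - \<phi>1) 0)^2 / (4 * \<phi>0)"
  unfolding s_fun_def by (auto simp: max_def)

lemma s_fun_nonneg: "\<phi>0 > 0 \<Longrightarrow> 0 \<le> s_fun \<phi>0 \<phi>1 x"
  by (simp add: s_fun_alt)

lemma s_fun_mono: assumes "\<phi>0 > 0" "x \<le> y" shows "s_fun \<phi>0 \<phi>1 x \<le> s_fun \<phi>0 \<phi>1 y"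
proof -
  have "(max (x - \<phi>1) 0)^2 \<le> (max (y - \<phi>1) 0)^2"
    by (rule power_mono) (use assms in auto)
  then show ?thesis using assms by (simp add: s_fun_alt divide_right_mono)
qed

lemma s_fun_zero: "\<phi>0 > 0 \<Longrightarrow> \<phi>1 \<ge> 0 \<Longrightarrow> s_fun \<phi>0 \<phi>1 0 = 0"
  by (simp add: s_fun_alt)

lemma sq_convex: "0 \<le> t \<Longrightarrow> t \<le> 1 \<Longrightarrow> (t * a + (1 - t) * b)^2 \<le> t * a^2 + (1 - t) * (b::real)^2"
proof -
  assume t: "0 \<le> t" "t \<le> 1"
  have "t * a^2 + (1 - t) * b^2 - (t * a + (1 - t) * b)^2 = t * (1 - t) * (a - b)^2"
    by (simp add: power2_eq_square algebra_simps)
  moreover have "0 \<le> t * (1 - t) * (a - b)^2" using t by simp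
  ultimately show ?thesis by linarith
qed

lemma s_fun_convex:
  assumes p0: "\<phi>0 > 0" and t: "0 \<le> t" "t \<le> 1"
  shows "s_fun \<phi>0 \<phi>1 (t * a + (1 - t) * b) \<le> t * s_fun \<phi>0 \<phi>1 a + (1 - t) * s_fun \<phi>0 \<phi>1 b"
proof -
  define h where "h = (\<lambda>x. max (x - \<phi>1) (0::real))"
  have h0: "0 \<le> h x" for x unfolding h_def by simp
  have hc: "h (t * a + (1 - t) * b) \<le> t * h a + (1 - t) * h b"
  proof -
    have "t * a + (1 - t) * b - \<phi>1 = t * (a - \<phi>1) + (1 - t) * (b - \<phi>1)" by (simp add: algebra_simps)
    also have "\<dots> \<le> t * h a + (1 - t) * h b" unfolding h_def
      by (intro add_mono mult_left_mono) (use t in auto)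
    finally show ?thesis unfolding h_def using t by (auto intro!: add_nonneg_nonneg mult_nonneg_nonneg)
  qed
  have "(h (t * a + (1 - t) * b))^2 \<le> (t * h a + (1 - t) * h b)^2"
    by (rule power_mono[OF hc h0])
  also have "\<dots> \<le> t * (h a)^2 + (1 - t) * (h b)^2" by (rule sq_convex[OF t])
  finally have "(h (t * a + (1 - t) * b))^2 / (4 * \<phi>0) \<le> (t * (h a)^2 + (1 - t) * (h b)^2) / (4 * \<phi>0)"
    using p0 by (simp add: divide_right_mono)
  then show ?thesis using p0 unfolding s_fun_alt[OF p0] h_def by (simp add: add_divide_distrib)
qed

lemma range_max_min:
  fixes g :: "'c::finite \<Rightarrow> real"
  shows "g c \<le> Max (range g)" "Min (range g) \<le> g c"
  by auto

lemma range_max_min_ex: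
  fixes g :: "'c::finite \<Rightarrow> real"
  shows "\<exists>c. g c = Max (range g)" "\<exists>c. g c = Min (range g)"
proof -
  have "Max (range g) \<in> range g" "Min (range g) \<in> range g" by (rule Max_in, simp, simp) (rule Min_in, simp, simp)
  then show "\<exists>c. g c = Max (range g)" "\<exists>c. g c = Min (range g)" by (metis imageE)+
qed

lemma T_weak:
  fixes g lam :: "'c::finite \<Rightarrow> real"
  assumes p0: "\<phi>0 > 0" and p1: "\<phi>1 \<ge> 0" and sum0: "(\<Sum>c\<in>UNIV. lam c) = 0"
  shows "dotv g lam \<le> T_hat \<phi>0 \<phi>1 g + s_fun \<phi>0 \<phi>1 ((\<Sum>c\<in>UNIV. \<bar>lam c\<bar>) / 2)"
proof -
  define M where "M = Max (range g)"
  define m where "m = Min (range g)"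
  define D where "D = M - m"
  define t where "t = (\<Sum>c\<in>UNIV. \<bar>lam c\<bar>) / 2"
  have gM: "g c \<le> M" "m \<le> g c" for c unfolding M_def m_def using range_max_min by auto
  have D0: "0 \<le> D" unfolding D_def using gM[of undefined] by linarith
  have t0: "0 \<le> t" unfolding t_def by (simp add: sum_nonneg)
  have "(\<Sum>c\<in>UNIV. (g c - (M + m) / 2) * lam c) = (\<Sum>c\<in>UNIV. g c * lam c) - ((M + m) / 2) * (\<Sum>c\<in>UNIV. lam c)"
    by (simp add: left_diff_distrib sum_subtractf sum_distrib_left)
  then have "dotv g lam = (\<Sum>c\<in>UNIV. (g c - (M + m) / 2) * lam c)"
    unfolding dotv_def sum0 by simp
  also have "\<dots> \<le> (\<Sum>c\<in>UNIV. (D / 2) * \<bar>lam c\<bar>)"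
  proof (rule sum_mono)
    fix c
    have "\<bar>g c - (M + m) / 2\<bar> \<le> D / 2" using gM[of c] unfolding D_def by (simp add: abs_le_iff field_simps)
    then have "\<bar>(g c - (M + m) / 2) * lam c\<bar> \<le> D / 2 * \<bar>lam c\<bar>"
      unfolding abs_mult by (rule mult_right_mono) simp
    then show "(g c - (M + m) / 2) * lam c \<le> D / 2 * \<bar>lam c\<bar>" by (simp add: abs_le_iff)
  qed
  also have "\<dots> = D * t" unfolding t_def by (simp add: sum_distrib_left[symmetric] sum_divide_distrib[symmetric])
  also have "\<dots> \<le> \<phi>0 * D^2 + \<phi>1 * D + s_fun \<phi>0 \<phi>1 t"
  proof (cases "\<phi>1 \<le> t")
    case True
    have "0 \<le> (2 * \<phi>0 * D - (t - \<phi>1))^2 / (4 * \<phi>0)" using p0 by simp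
    also have "(2 * \<phi>0 * D - (t - \<phi>1))^2 / (4 * \<phi>0) = \<phi>0 * D^2 - D * (t - \<phi>1) + (t - \<phi>1)^2 / (4 * \<phi>0)"
      using p0 by (simp add: power2_eq_square field_simps)
    finally show ?thesis using True unfolding s_fun_def by (simp add: algebra_simps)
  next
    case False
    then have "D * t \<le> \<phi>1 * D" using D0 by (simp add: mult_left_mono mult.commute)
    moreover have "0 \<le> \<phi>0 * D^2" using p0 by simp
    moreover have "0 \<le> s_fun \<phi>0 \<phi>1 t" by (rule s_fun_nonneg[OF p0])
    ultimately show ?thesis by linarith
  qed
  finally show ?thesis unfolding T_hat_def t_def D_def M_def m_def by simp
qed

lemma T_attain:
  fixes g :: "'c::finite \<Rightarrow> real"
  assumes p0: "\<phi>0 > 0" and p1: "\<phi>1 \<ge> 0"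
  shows "\<exists>lam. T_hat \<phi>0 \<phi>1 g \<le> dotv g lam - s_fun \<phi>0 \<phi>1 ((\<Sum>c\<in>UNIV. \<bar>lam c\<bar>) / 2)"
proof -
  define M where "M = Max (range g)"
  define m where "m = Min (range g)"
  define D where "D = M - m"
  obtain cM where cM: "g cM = M" unfolding M_def using range_max_min_ex by blast
  obtain cm where cm: "g cm = m" unfolding m_def using range_max_min_ex by blast
  define \<tau> where "\<tau> = \<phi>1 + 2 * \<phi>0 * D"
  have D0: "0 \<le> D" unfolding D_def using range_max_min[of g cM] M_def m_def by linarith
  have tau0: "0 \<le> \<tau>" unfolding \<tau>_def using p0 p1 D0 by simp
  define lam where "lam = (\<lambda>c. (if c = cM then \<tau> else 0) - (if c = cm then \<tau> else 0))"
  show ?thesis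
  proof (cases "cM = cm")
    case True
    then have "D = 0" unfolding D_def using cM cm by simp
    then have "T_hat \<phi>0 \<phi>1 g = 0" unfolding T_hat_def D_def M_def m_def by simp
    moreover have "lam = (\<lambda>c. 0)" unfolding lam_def using True by auto
    ultimately show ?thesis using s_fun_zero[OF p0 p1] by (intro exI[of _ lam]) (simp add: dotv_def)
  next
    case False
    have dl: "dotv g lam = \<tau> * D" unfolding dotv_def lam_def D_def using False cM cm
      by (simp add: right_diff_distrib sum_subtractf ifz_mult2 sum.delta if_distrib[of "\<lambda>x. g _ * x"] cong: if_cong)
    have sl: "(\<Sum>c\<in>UNIV. \<bar>lam c\<bar>) / 2 = \<tau>"
    proof -
      have "(\<Sum>c\<in>UNIV. \<bar>lam c\<bar>) = (\<Sum>c\<in>UNIV. (if c = cM then \<tau> else 0) + (if c = cm then \<tau> else 0))"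
        unfolding lam_def using False tau0 by (intro sum.cong) auto
      also have "\<dots> = 2 * \<tau>" by (simp add: sum.distrib)
      finally show ?thesis by simp
    qed
    have "s_fun \<phi>0 \<phi>1 \<tau> = \<phi>0 * D^2" unfolding s_fun_def \<tau>_def using p0 D0
      by (simp add: power2_eq_square field_simps)
    then have "dotv g lam - s_fun \<phi>0 \<phi>1 ((\<Sum>c\<in>UNIV. \<bar>lam c\<bar>) / 2) = T_hat \<phi>0 \<phi>1 g"
      unfolding dl sl T_hat_def D_def[symmetric] M_def[symmetric] m_def[symmetric] \<tau>_def
      by (simp add: power2_eq_square algebra_simps)
    then show ?thesis by (intro exI[of _ lam]) simp
  qed
qed



lemma cross_mtf_of:
  fixes W :: "('a::finite \<times> 'b::finite) cmat \<Rightarrow> real"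
    and P :: "'c::finite \<Rightarrow> ('a \<times> 'b) cmat"
    and xig xit :: "('a \<times> 'x::finite) cvec"
  assumes p0: "\<phi>0 > 0" and p1: "\<phi>1 \<ge> 0"
    and H: "\<And>(J :: ('x \<times> 'b) cmat) lam. choi J \<Longrightarrow> p \<le> W (rhoJ xig J) + s_fun \<phi>0 \<phi>1 ((\<Sum>c\<in>UNIV. \<bar>lam c\<bar>) / 2)
        + dotv g (\<lambda>c. qhon c - Phi P (rhoJ xit J) c - lam c)"
  shows "cross_mtf W P xig xit g (p - dotv g qhon + T_hat \<phi>0 \<phi>1 g)"
  unfolding cross_mtf_def
proof (intro allI impI)
  fix q :: "'c \<Rightarrow> real" assume "prob_dist q"
  obtain lam where lam: "T_hat \<phi>0 \<phi>1 g \<le> dotv g lam - s_fun \<phi>0 \<phi>1 ((\<Sum>c\<in>UNIV. \<bar>lam c\<bar>) / 2)"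
    using T_attain[OF p0 p1] by blast
  show "ereal (dotv g q + (p - dotv g qhon + T_hat \<phi>0 \<phi>1 g)) \<le> r_cross W P xig xit q"
    unfolding r_cross_def
  proof (rule Inf_greatest)
    fix x assume "x \<in> {ereal (W (rhoJ xig J)) | J :: ('x \<times> 'b) cmat. choi J \<and> Phi P (rhoJ xit J) = q}"
    then obtain J :: "('x \<times> 'b) cmat" where J: "choi J" "Phi P (rhoJ xit J) = q" and x: "x = ereal (W (rhoJ xig J))" by blast
    have h: "p \<le> W (rhoJ xig J) + s_fun \<phi>0 \<phi>1 ((\<Sum>c\<in>UNIV. \<bar>lam c\<bar>) / 2) + dotv g (\<lambda>c. qhon c - q c - lam c)"
      using H[OF J(1), of lam] J(2) by simp
    have "dotv g (\<lambda>c. qhon c - q c - lam c) = dotv g qhon - dotv g q - dotv g lam"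
      unfolding dotv_def by (simp add: right_diff_distrib sum_subtractf)
    then show "ereal (dotv g q + (p - dotv g qhon + T_hat \<phi>0 \<phi>1 g)) \<le> x"
      unfolding x using h lam by simp
  qed
qed

theorem mainTheorem2:
  fixes W :: "('a::finite \<times> 'b::finite) cmat \<Rightarrow> real"
    and P :: "'c::finite \<Rightarrow> ('a \<times> 'b) cmat"
    and xig xit :: "('a \<times> 'x::finite) cvec"
    and \<phi>0 \<phi>1 :: real
    and qhon :: "'c \<Rightarrow> real"
    and L :: "('a \<times> 'b) cmat \<Rightarrow> ('c \<Rightarrow> real) \<Rightarrow> real"
    and r_best r_SDP :: ereal
  assumes pure_g: "pure_state xig" and pure_t: "pure_state xit"
    and W_nonneg: "\<forall>\<rho>. density \<rho> \<longrightarrow> 0 \<le> W \<rho>"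
    and W_convex: "convex_on_states W"
    and P_povm: "povm P"
    and phi0: "\<phi>0 > 0" and phi1: "\<phi>1 \<ge> 0"
    and qhon: "prob_dist qhon"
    and r_best_def: "r_best = Sup {ereal (dotv g qhon + k - T_hat \<phi>0 \<phi>1 g) | g k.
                                     cross_mtf W P xig xit g k}"
    and L_affine: "affine_fun L"
    and L_le: "\<forall>(J :: ('x \<times> 'b) cmat) \<nu>. choi J \<longrightarrow>
                 L (rhoJ xig J) \<nu> \<le> W (rhoJ xig J) + s_fun \<phi>0 \<phi>1 ((\<Sum>c\<in>UNIV. \<nu> c) / 2)"
    and r_SDP_def: "r_SDP = Inf {ereal (L (rhoJ xig J) \<nu>) | (J :: ('x \<times> 'b) cmat) lam \<nu>.
                       choi J \<and> (\<forall>c. qhon c - Phi P (rhoJ xit J) c - lam c = 0)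
                       \<and> (\<forall>c. - \<nu> c \<le> lam c \<and> lam c \<le> \<nu> c)}"
    and r_SDP_finite: "\<bar>r_SDP\<bar> \<noteq> \<infinity>"
  shows
    "r_best = Inf {ereal (W (rhoJ xig J)) + T_star \<phi>0 \<phi>1 lam | (J :: ('x \<times> 'b) cmat) lam.
                     choi J \<and> (\<forall>c. qhon c - Phi P (rhoJ xit J) c - lam c = 0)}
     \<and> r_best = Inf {ereal (W (rhoJ xig J) + s_fun \<phi>0 \<phi>1 ((\<Sum>c\<in>UNIV. \<nu> c) / 2))
                     | (J :: ('x \<times> 'b) cmat) lam \<nu>.
                     choi J \<and> (\<forall>c. qhon c - Phi P (rhoJ xit J) c - lam c = 0)
                     \<and> (\<forall>c. - \<nu> c \<le> lam c \<and> lam c \<le> \<nu> c)}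
     \<and> (\<exists>gs. r_SDP = Inf {ereal (L (rhoJ xig J) \<nu>
                              + dotv gs (\<lambda>c. qhon c - Phi P (rhoJ xit J) c - lam c))
                           | (J :: ('x \<times> 'b) cmat) lam \<nu>.
                           choi J \<and> (\<forall>c. - \<nu> c \<le> lam c \<and> lam c \<le> \<nu> c)})
     \<and> (\<forall>gs. r_SDP = Inf {ereal (L (rhoJ xig J) \<nu>
                              + dotv gs (\<lambda>c. qhon c - Phi P (rhoJ xit J) c - lam c))
                           | (J :: ('x \<times> 'b) cmat) lam \<nu>.
                           choi J \<and> (\<forall>c. - \<nu> c \<le> lam c \<and> lam c \<le> \<nu> c)}
            \<longrightarrow> (\<exists>k. cross_mtf W P xig xit gs k
                     \<and> ereal (dotv gs qhon + k - T_hat \<phi>0 \<phi>1 gs) \<ge> r_SDP))"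
  
proof -
  let ?rg = "\<lambda>J :: ('x \<times> 'b) cmat. rhoJ xig J"
  let ?ph = "\<lambda>J :: ('x \<times> 'b) cmat. Phi P (rhoJ xit J)"
  have dens_g: "Defs.density (rhoJ xig J)" if "choi J" for J :: "('x \<times> 'b) cmat"
    using rhoJ_density[OF that pure_g] .
  have w0: "0 \<le> W (rhoJ xig J)" if "choi J" for J :: "('x \<times> 'b) cmat"
    using W_nonneg dens_g[OF that] by blast
  have phprob: "prob_dist (Phi P (rhoJ xit J))" if "choi J" for J :: "('x \<times> 'b) cmat"
    using Phi_prob[OF P_povm rhoJ_density[OF that pure_t]] .
  have qsum: "(\<Sum>c\<in>UNIV. qhon c) = 1" using qhon unfolding prob_dist_def by simp
  obtain J0 :: "('x \<times> 'b) cmat" where J0: "choi J0" using choi_exists by blast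
  have lam_sum0: "(\<Sum>c\<in>UNIV. qhon c - Phi P (rhoJ xit J) c) = 0" if "choi J" for J :: "('x \<times> 'b) cmat"
    using phprob[OF that] qsum unfolding prob_dist_def by (simp add: sum_subtractf)

  define Set1 where "Set1 = {ereal (W (rhoJ xig J)) + T_star \<phi>0 \<phi>1 lam | (J :: ('x \<times> 'b) cmat) lam.
                     choi J \<and> (\<forall>c. qhon c - Phi P (rhoJ xit J) c - lam c = 0)}"
  define Set2 where "Set2 = {ereal (W (rhoJ xig J) + s_fun \<phi>0 \<phi>1 ((\<Sum>c\<in>UNIV. \<nu> c) / 2))
                     | (J :: ('x \<times> 'b) cmat) lam \<nu>.
                     choi J \<and> (\<forall>c. qhon c - Phi P (rhoJ xit J) c - lam c = 0)
                     \<and> (\<forall>c. - \<nu> c \<le> lam c \<and> lam c \<le> \<nu> c)}"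
  define Dual where "Dual = {ereal (dotv g qhon + k - T_hat \<phi>0 \<phi>1 g) | g k. cross_mtf W P xig xit g k}"
  have rb: "r_best = Sup Dual" unfolding Dual_def r_best_def ..

  have set1_el: "x \<in> Set1 \<longleftrightarrow> (\<exists>J. choi J \<and> x = ereal (W (rhoJ xig J) + s_fun \<phi>0 \<phi>1 ((\<Sum>c\<in>UNIV. \<bar>qhon c - Phi P (rhoJ xit J) c\<bar>) / 2)))" for x
  proof
    assume "x \<in> Set1"
    then obtain J lam where J: "choi J" "\<forall>c. qhon c - Phi P (rhoJ xit J) c - lam c = 0"
      and x: "x = ereal (W (rhoJ xig J)) + T_star \<phi>0 \<phi>1 lam" unfolding Set1_def by blast
    have lam: "lam = (\<lambda>c. qhon c - Phi P (rhoJ xit J) c)" using J(2) by (auto simp: fun_eq_iff)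
    show "\<exists>J. choi J \<and> x = ereal (W (rhoJ xig J) + s_fun \<phi>0 \<phi>1 ((\<Sum>c\<in>UNIV. \<bar>qhon c - Phi P (rhoJ xit J) c\<bar>) / 2))"
      using J(1) x lam_sum0[OF J(1)] unfolding lam T_star_def by auto
  next
    assume "\<exists>J. choi J \<and> x = ereal (W (rhoJ xig J) + s_fun \<phi>0 \<phi>1 ((\<Sum>c\<in>UNIV. \<bar>qhon c - Phi P (rhoJ xit J) c\<bar>) / 2))"
    then obtain J where J: "choi J" "x = ereal (W (rhoJ xig J) + s_fun \<phi>0 \<phi>1 ((\<Sum>c\<in>UNIV. \<bar>qhon c - Phi P (rhoJ xit J) c\<bar>) / 2))" by blast
    have "x = ereal (W (rhoJ xig J)) + T_star \<phi>0 \<phi>1 (\<lambda>c. qhon c - Phi P (rhoJ xit J) c)"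
      using J lam_sum0[OF J(1)] unfolding T_star_def by simp
    then show "x \<in> Set1" unfolding Set1_def using J(1) by auto
  qed

  have weak: "d \<le> x" if d: "d \<in> Dual" and x: "x \<in> Set1" for d x
  proof -
    obtain g k where gk: "cross_mtf W P xig xit g k" and dd: "d = ereal (dotv g qhon + k - T_hat \<phi>0 \<phi>1 g)"
      using d unfolding Dual_def by blast
    obtain J where J: "choi J" and xx: "x = ereal (W (rhoJ xig J) + s_fun \<phi>0 \<phi>1 ((\<Sum>c\<in>UNIV. \<bar>qhon c - Phi P (rhoJ xit J) c\<bar>) / 2))"
      using x set1_el by blast
    have "ereal (dotv g (Phi P (rhoJ xit J)) + k) \<le> r_cross W P xig xit (Phi P (rhoJ xit J))"
      using gk phprob[OF J] unfolding cross_mtf_def by blast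
    also have "\<dots> \<le> ereal (W (rhoJ xig J))" unfolding r_cross_def by (rule Inf_lower) (use J in blast)
    finally have k: "dotv g (Phi P (rhoJ xit J)) + k \<le> W (rhoJ xig J)" by simp
    have tw: "dotv g (\<lambda>c. qhon c - Phi P (rhoJ xit J) c) \<le> T_hat \<phi>0 \<phi>1 g + s_fun \<phi>0 \<phi>1 ((\<Sum>c\<in>UNIV. \<bar>qhon c - Phi P (rhoJ xit J) c\<bar>) / 2)"
      by (rule T_weak[OF phi0 phi1 lam_sum0[OF J]])
    have "dotv g (\<lambda>c. qhon c - Phi P (rhoJ xit J) c) = dotv g qhon - dotv g (Phi P (rhoJ xit J))"
      unfolding dotv_def by (simp add: right_diff_distrib sum_subtractf)
    then show ?thesis unfolding dd xx using k tw by simp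
  qed

  have inf1_ge0: "0 \<le> Inf Set1"
  proof (rule Inf_greatest)
    fix x assume "x \<in> Set1"
    then obtain J where J: "choi J" and xx: "x = ereal (W (rhoJ xig J) + s_fun \<phi>0 \<phi>1 ((\<Sum>c\<in>UNIV. \<bar>qhon c - Phi P (rhoJ xit J) c\<bar>) / 2))"
      using set1_el by blast
    show "0 \<le> x" unfolding xx using w0[OF J] s_fun_nonneg[OF phi0] by (simp add: add_nonneg_nonneg)
  qed
  have "Inf Set1 \<le> ereal (W (rhoJ xig J0) + s_fun \<phi>0 \<phi>1 ((\<Sum>c\<in>UNIV. \<bar>qhon c - Phi P (rhoJ xit J0) c\<bar>) / 2))"
    by (rule Inf_lower) (use J0 set1_el in blast)
  then have fin1: "\<bar>Inf Set1\<bar> \<noteq> \<infinity>" using inf1_ge0 by auto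
  define p1 where "p1 = real_of_ereal (Inf Set1)"
  have p1e: "ereal p1 = Inf Set1" unfolding p1_def using fin1 by (simp add: ereal_real)

  \<comment> \<open>strong duality via separation\<close>
  have mult1: "\<exists>g. \<forall>d\<in>{(J :: ('x \<times> 'b) cmat, lam :: 'c \<Rightarrow> real). choi J}.
      p1 \<le> (case d of (J, lam) \<Rightarrow> W (rhoJ xig J) + s_fun \<phi>0 \<phi>1 ((\<Sum>c\<in>UNIV. \<bar>lam c\<bar>) / 2))
        + dotv g (case d of (J, lam) \<Rightarrow> (\<lambda>c. qhon c - Phi P (rhoJ xit J) c - lam c))"
  proof (rule lagrange_sep)
    fix d1 d2 :: "('x \<times> 'b) cmat \<times> ('c \<Rightarrow> real)" and t :: real
    assume d1: "d1 \<in> {(J, lam). choi J}" and d2: "d2 \<in> {(J, lam). choi J}" and t: "0 \<le> t" "t \<le> 1"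
    obtain J1 l1 where e1: "d1 = (J1, l1)" "choi J1" using d1 by auto
    obtain J2 l2 where e2: "d2 = (J2, l2)" "choi J2" using d2 by auto
    let ?J = "comb t J1 J2" and ?l = "\<lambda>c. t * l1 c + (1 - t) * l2 c"
    have cJ: "choi ?J" by (rule choi_comb[OF e1(2) e2(2) t])
    have wc: "W (rhoJ xig ?J) \<le> t * W (rhoJ xig J1) + (1 - t) * W (rhoJ xig J2)"
      unfolding rhoJ_comb unfolding comb_def
      by (rule W_convex[unfolded convex_on_states_def, rule_format, OF dens_g[OF e1(2)] dens_g[OF e2(2)] t])
    have nl: "(\<Sum>c\<in>UNIV. \<bar>?l c\<bar>) / 2 \<le> t * ((\<Sum>c\<in>UNIV. \<bar>l1 c\<bar>) / 2) + (1 - t) * ((\<Sum>c\<in>UNIV. \<bar>l2 c\<bar>) / 2)"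
    proof -
      have "(\<Sum>c\<in>UNIV. \<bar>?l c\<bar>) \<le> (\<Sum>c\<in>UNIV. t * \<bar>l1 c\<bar> + (1 - t) * \<bar>l2 c\<bar>)"
      proof (rule sum_mono)
        fix c
        have "\<bar>?l c\<bar> \<le> \<bar>t * l1 c\<bar> + \<bar>(1 - t) * l2 c\<bar>" by (rule abs_triangle_ineq)
        then show "\<bar>?l c\<bar> \<le> t * \<bar>l1 c\<bar> + (1 - t) * \<bar>l2 c\<bar>" using t by (simp add: abs_mult)
      qed
      also have "\<dots> = t * (\<Sum>c\<in>UNIV. \<bar>l1 c\<bar>) + (1 - t) * (\<Sum>c\<in>UNIV. \<bar>l2 c\<bar>)"
        by (simp add: sum.distrib sum_distrib_left)
      finally show ?thesis by simp
    qed
    have sc: "s_fun \<phi>0 \<phi>1 ((\<Sum>c\<in>UNIV. \<bar>?l c\<bar>) / 2) \<le> t * s_fun \<phi>0 \<phi>1 ((\<Sum>c\<in>UNIV. \<bar>l1 c\<bar>) / 2) + (1 - t) * s_fun \<phi>0 \<phi>1 ((\<Sum>c\<in>UNIV. \<bar>l2 c\<bar>) / 2)"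
      using s_fun_mono[OF phi0 nl] s_fun_convex[OF phi0 t] by (rule order_trans)
    have Ueq: "(\<lambda>c. qhon c - Phi P (rhoJ xit ?J) c - ?l c) = (\<lambda>c. t * (qhon c - Phi P (rhoJ xit J1) c - l1 c) + (1 - t) * (qhon c - Phi P (rhoJ xit J2) c - l2 c))"
      unfolding rhoJ_comb Phi_comb by (simp add: fun_eq_iff algebra_simps)
    show "\<exists>d\<in>{(J, lam). choi J}.
       (case d of (J, lam) \<Rightarrow> \<lambda>c. qhon c - Phi P (rhoJ xit J) c - lam c) =
       (\<lambda>c. t * (case d1 of (J, lam) \<Rightarrow> \<lambda>c. qhon c - Phi P (rhoJ xit J) c - lam c) c +
             (1 - t) * (case d2 of (J, lam) \<Rightarrow> \<lambda>c. qhon c - Phi P (rhoJ xit J) c - lam c) c) \<and>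
       (case d of (J, lam) \<Rightarrow> W (rhoJ xig J) + s_fun \<phi>0 \<phi>1 ((\<Sum>c\<in>UNIV. \<bar>lam c\<bar>) / 2))
       \<le> t * (case d1 of (J, lam) \<Rightarrow> W (rhoJ xig J) + s_fun \<phi>0 \<phi>1 ((\<Sum>c\<in>UNIV. \<bar>lam c\<bar>) / 2)) +
          (1 - t) * (case d2 of (J, lam) \<Rightarrow> W (rhoJ xig J) + s_fun \<phi>0 \<phi>1 ((\<Sum>c\<in>UNIV. \<bar>lam c\<bar>) / 2))"
    proof (rule bexI[of _ "(?J, ?l)"])
      show "(?J, ?l) \<in> {(J, lam). choi J}" using cJ by simp
      have ineq: "W (rhoJ xig ?J) + s_fun \<phi>0 \<phi>1 ((\<Sum>c\<in>UNIV. \<bar>?l c\<bar>) / 2) \<le>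
          t * (W (rhoJ xig J1) + s_fun \<phi>0 \<phi>1 ((\<Sum>c\<in>UNIV. \<bar>l1 c\<bar>) / 2)) +
          (1 - t) * (W (rhoJ xig J2) + s_fun \<phi>0 \<phi>1 ((\<Sum>c\<in>UNIV. \<bar>l2 c\<bar>) / 2))"
        using wc sc unfolding distrib_left by linarith
      show "(case (?J, ?l) of (J, lam) \<Rightarrow> \<lambda>c. qhon c - Phi P (rhoJ xit J) c - lam c) =
       (\<lambda>c. t * (case d1 of (J, lam) \<Rightarrow> \<lambda>c. qhon c - Phi P (rhoJ xit J) c - lam c) c +
             (1 - t) * (case d2 of (J, lam) \<Rightarrow> \<lambda>c. qhon c - Phi P (rhoJ xit J) c - lam c) c) \<and>
       (case (?J, ?l) of (J, lam) \<Rightarrow> W (rhoJ xig J) + s_fun \<phi>0 \<phi>1 ((\<Sum>c\<in>UNIV. \<bar>lam c\<bar>) / 2))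
       \<le> t * (case d1 of (J, lam) \<Rightarrow> W (rhoJ xig J) + s_fun \<phi>0 \<phi>1 ((\<Sum>c\<in>UNIV. \<bar>lam c\<bar>) / 2)) +
          (1 - t) * (case d2 of (J, lam) \<Rightarrow> W (rhoJ xig J) + s_fun \<phi>0 \<phi>1 ((\<Sum>c\<in>UNIV. \<bar>lam c\<bar>) / 2))"
        unfolding e1(1) e2(1) prod.case using Ueq ineq by blast
    qed
  next
    fix u :: "'c \<Rightarrow> real"
    show "\<exists>d\<in>{(J :: ('x \<times> 'b) cmat, lam :: 'c \<Rightarrow> real). choi J}. (case d of (J, lam) \<Rightarrow> \<lambda>c. qhon c - Phi P (rhoJ xit J) c - lam c) = u"
      using J0 by (intro bexI[of _ "(J0, \<lambda>c. qhon c - Phi P (rhoJ xit J0) c - u c)"]) auto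
  next
    fix d :: "('x \<times> 'b) cmat \<times> ('c \<Rightarrow> real)"
    assume d: "d \<in> {(J, lam). choi J}" and U0: "(case d of (J, lam) \<Rightarrow> \<lambda>c. qhon c - Phi P (rhoJ xit J) c - lam c) = (\<lambda>c. 0)"
    obtain J lam where e: "d = (J, lam)" "choi J" using d by auto
    have lam: "lam = (\<lambda>c. qhon c - Phi P (rhoJ xit J) c)" using U0 unfolding e by (auto simp: fun_eq_iff)
    have "ereal p1 \<le> ereal (W (rhoJ xig J) + s_fun \<phi>0 \<phi>1 ((\<Sum>c\<in>UNIV. \<bar>qhon c - Phi P (rhoJ xit J) c\<bar>) / 2))"
      unfolding p1e by (rule Inf_lower, subst set1_el) (use e in blast)
    then show "p1 \<le> (case d of (J, lam) \<Rightarrow> W (rhoJ xig J) + s_fun \<phi>0 \<phi>1 ((\<Sum>c\<in>UNIV. \<bar>lam c\<bar>) / 2))"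
      unfolding e lam by simp
  qed
  then obtain g1 where g1a: "\<forall>d\<in>{(J :: ('x \<times> 'b) cmat, lam :: 'c \<Rightarrow> real). choi J}.
      p1 \<le> (case d of (J, lam) \<Rightarrow> W (rhoJ xig J) + s_fun \<phi>0 \<phi>1 ((\<Sum>c\<in>UNIV. \<bar>lam c\<bar>) / 2))
        + dotv g1 (case d of (J, lam) \<Rightarrow> (\<lambda>c. qhon c - Phi P (rhoJ xit J) c - lam c))" by blast
  have g1: "p1 \<le> W (rhoJ xig J) + s_fun \<phi>0 \<phi>1 ((\<Sum>c\<in>UNIV. \<bar>lam c\<bar>) / 2)
        + dotv g1 (\<lambda>c. qhon c - Phi P (rhoJ xit J) c - lam c)" if "choi J" for J lam
    using g1a[rule_format, of "(J, lam)"] that by simp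
  have "cross_mtf W P xig xit g1 (p1 - dotv g1 qhon + T_hat \<phi>0 \<phi>1 g1)"
    by (rule cross_mtf_of[OF phi0 phi1]) (use g1 in blast)
  then have "ereal (dotv g1 qhon + (p1 - dotv g1 qhon + T_hat \<phi>0 \<phi>1 g1) - T_hat \<phi>0 \<phi>1 g1) \<in> Dual"
    unfolding Dual_def by blast
  then have "ereal p1 \<le> r_best" unfolding rb by (auto intro: Sup_upper)
  moreover have "r_best \<le> Inf Set1" unfolding rb using weak by (auto intro!: Sup_least Inf_greatest)
  ultimately have part1: "r_best = Inf Set1" unfolding p1e by simp

  have "Inf Set2 \<le> Inf Set1"
  proof (rule Inf_superset_mono, rule subsetI)
    fix x assume "x \<in> Set1"
    then obtain J where J: "choi J" and xx: "x = ereal (W (rhoJ xig J) + s_fun \<phi>0 \<phi>1 ((\<Sum>c\<in>UNIV. \<bar>qhon c - Phi P (rhoJ xit J) c\<bar>) / 2))"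
      using set1_el by blast
    show "x \<in> Set2" unfolding Set2_def xx using J
      by (intro CollectI exI[of _ J] exI[of _ "\<lambda>c. qhon c - Phi P (rhoJ xit J) c"] exI[of _ "\<lambda>c. \<bar>qhon c - Phi P (rhoJ xit J) c\<bar>"]) auto
  qed
  moreover have "Inf Set1 \<le> Inf Set2"
  proof (rule Inf_mono)
    fix y assume "y \<in> Set2"
    then obtain J lam \<nu> where J: "choi J" "\<forall>c. qhon c - Phi P (rhoJ xit J) c - lam c = 0"
      "\<forall>c. - \<nu> c \<le> lam c \<and> lam c \<le> \<nu> c" and yy: "y = ereal (W (rhoJ xig J) + s_fun \<phi>0 \<phi>1 ((\<Sum>c\<in>UNIV. \<nu> c) / 2))"
      unfolding Set2_def by blast
    have lam: "lam = (\<lambda>c. qhon c - Phi P (rhoJ xit J) c)" using J(2) by (auto simp: fun_eq_iff)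
    have "(\<Sum>c\<in>UNIV. \<bar>qhon c - Phi P (rhoJ xit J) c\<bar>) / 2 \<le> (\<Sum>c\<in>UNIV. \<nu> c) / 2"
    proof -
      have "\<bar>qhon c - Phi P (rhoJ xit J) c\<bar> \<le> \<nu> c" for c using J(3) unfolding lam abs_le_iff
        by (metis minus_diff_eq neg_le_iff_le)
      then show ?thesis by (intro divide_right_mono sum_mono) auto
    qed
    then have "ereal (W (rhoJ xig J) + s_fun \<phi>0 \<phi>1 ((\<Sum>c\<in>UNIV. \<bar>qhon c - Phi P (rhoJ xit J) c\<bar>) / 2)) \<le> y"
      unfolding yy using s_fun_mono[OF phi0] by simp
    moreover have "ereal (W (rhoJ xig J) + s_fun \<phi>0 \<phi>1 ((\<Sum>c\<in>UNIV. \<bar>qhon c - Phi P (rhoJ xit J) c\<bar>) / 2)) \<in> Set1"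
      using J(1) set1_el by blast
    ultimately show "\<exists>x\<in>Set1. x \<le> y" by blast
  qed
  ultimately have part2: "r_best = Inf Set2" using part1 by simp

  define p2 where "p2 = real_of_ereal r_SDP"
  have p2e: "ereal p2 = r_SDP" unfolding p2_def using r_SDP_finite by (simp add: ereal_real)
  define Lag where "Lag = (\<lambda>gs. Inf {ereal (L (rhoJ xig J) \<nu>
                              + dotv gs (\<lambda>c. qhon c - Phi P (rhoJ xit J) c - lam c))
                           | (J :: ('x \<times> 'b) cmat) lam \<nu>.
                           choi J \<and> (\<forall>c. - \<nu> c \<le> lam c \<and> lam c \<le> \<nu> c)})"
  have mult2: "\<exists>g. \<forall>d\<in>{(J :: ('x \<times> 'b) cmat, lam :: 'c \<Rightarrow> real, \<nu> :: 'c \<Rightarrow> real). choi J \<and> (\<forall>c. - \<nu> c \<le> lam c \<and> lam c \<le> \<nu> c)}.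
      p2 \<le> (case d of (J, lam, \<nu>) \<Rightarrow> L (rhoJ xig J) \<nu>)
        + dotv g (case d of (J, lam, \<nu>) \<Rightarrow> (\<lambda>c. qhon c - Phi P (rhoJ xit J) c - lam c))"
  proof (rule lagrange_sep)
    fix d1 d2 :: "('x \<times> 'b) cmat \<times> ('c \<Rightarrow> real) \<times> ('c \<Rightarrow> real)" and t :: real
    assume d1: "d1 \<in> {(J, lam, \<nu>). choi J \<and> (\<forall>c. - \<nu> c \<le> lam c \<and> lam c \<le> \<nu> c)}"
      and d2: "d2 \<in> {(J, lam, \<nu>). choi J \<and> (\<forall>c. - \<nu> c \<le> lam c \<and> lam c \<le> \<nu> c)}" and t: "0 \<le> t" "t \<le> 1"
    obtain J1 l1 n1 where e1: "d1 = (J1, l1, n1)" "choi J1" "\<forall>c. - n1 c \<le> l1 c \<and> l1 c \<le> n1 c" using d1 by auto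
    obtain J2 l2 n2 where e2: "d2 = (J2, l2, n2)" "choi J2" "\<forall>c. - n2 c \<le> l2 c \<and> l2 c \<le> n2 c" using d2 by auto
    let ?J = "comb t J1 J2" and ?l = "\<lambda>c. t * l1 c + (1 - t) * l2 c" and ?n = "\<lambda>c. t * n1 c + (1 - t) * n2 c"
    have cJ: "choi ?J" by (rule choi_comb[OF e1(2) e2(2) t])
    have bnd: "\<forall>c. - ?n c \<le> ?l c \<and> ?l c \<le> ?n c"
    proof
      fix c
      have b1: "- n1 c \<le> l1 c" "l1 c \<le> n1 c" "- n2 c \<le> l2 c" "l2 c \<le> n2 c" using e1(3) e2(3) by auto
      have t1: "0 \<le> 1 - t" using t by simp
      have "t * (- n1 c) \<le> t * l1 c" "t * l1 c \<le> t * n1 c"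
        using mult_left_mono[OF b1(1) t(1)] mult_left_mono[OF b1(2) t(1)] by auto
      moreover have "(1 - t) * (- n2 c) \<le> (1 - t) * l2 c" "(1 - t) * l2 c \<le> (1 - t) * n2 c"
        using mult_left_mono[OF b1(3) t1] mult_left_mono[OF b1(4) t1] by auto
      ultimately show "- ?n c \<le> ?l c \<and> ?l c \<le> ?n c" by (simp add: algebra_simps)
    qed
    have Lc: "L (rhoJ xig ?J) ?n = t * L (rhoJ xig J1) n1 + (1 - t) * L (rhoJ xig J2) n2"
      unfolding rhoJ_comb unfolding comb_def by (rule L_affine[unfolded affine_fun_def, rule_format])
    have Ueq: "(\<lambda>c. qhon c - Phi P (rhoJ xit ?J) c - ?l c) = (\<lambda>c. t * (qhon c - Phi P (rhoJ xit J1) c - l1 c) + (1 - t) * (qhon c - Phi P (rhoJ xit J2) c - l2 c))"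
      unfolding rhoJ_comb Phi_comb by (simp add: fun_eq_iff algebra_simps)
    show "\<exists>d\<in>{(J, lam, \<nu>). choi J \<and> (\<forall>c. - \<nu> c \<le> lam c \<and> lam c \<le> \<nu> c)}.
       (case d of (J, lam, \<nu>) \<Rightarrow> \<lambda>c. qhon c - Phi P (rhoJ xit J) c - lam c) =
       (\<lambda>c. t * (case d1 of (J, lam, \<nu>) \<Rightarrow> \<lambda>c. qhon c - Phi P (rhoJ xit J) c - lam c) c +
             (1 - t) * (case d2 of (J, lam, \<nu>) \<Rightarrow> \<lambda>c. qhon c - Phi P (rhoJ xit J) c - lam c) c) \<and>
       (case d of (J, lam, \<nu>) \<Rightarrow> L (rhoJ xig J) \<nu>)
       \<le> t * (case d1 of (J, lam, \<nu>) \<Rightarrow> L (rhoJ xig J) \<nu>) + (1 - t) * (case d2 of (J, lam, \<nu>) \<Rightarrow> L (rhoJ xig J) \<nu>)"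
    proof (rule bexI[of _ "(?J, ?l, ?n)"])
      show "(?J, ?l, ?n) \<in> {(J, lam, \<nu>). choi J \<and> (\<forall>c. - \<nu> c \<le> lam c \<and> lam c \<le> \<nu> c)}"
        using cJ bnd by simp
      show "(case (?J, ?l, ?n) of (J, lam, \<nu>) \<Rightarrow> \<lambda>c. qhon c - Phi P (rhoJ xit J) c - lam c) =
       (\<lambda>c. t * (case d1 of (J, lam, \<nu>) \<Rightarrow> \<lambda>c. qhon c - Phi P (rhoJ xit J) c - lam c) c +
             (1 - t) * (case d2 of (J, lam, \<nu>) \<Rightarrow> \<lambda>c. qhon c - Phi P (rhoJ xit J) c - lam c) c) \<and>
       (case (?J, ?l, ?n) of (J, lam, \<nu>) \<Rightarrow> L (rhoJ xig J) \<nu>)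
       \<le> t * (case d1 of (J, lam, \<nu>) \<Rightarrow> L (rhoJ xig J) \<nu>) + (1 - t) * (case d2 of (J, lam, \<nu>) \<Rightarrow> L (rhoJ xig J) \<nu>)"
        unfolding e1(1) e2(1) prod.case using Ueq Lc by simp
    qed
  next
    fix u :: "'c \<Rightarrow> real"
    show "\<exists>d\<in>{(J :: ('x \<times> 'b) cmat, lam :: 'c \<Rightarrow> real, \<nu> :: 'c \<Rightarrow> real). choi J \<and> (\<forall>c. - \<nu> c \<le> lam c \<and> lam c \<le> \<nu> c)}.
       (case d of (J, lam, \<nu>) \<Rightarrow> \<lambda>c. qhon c - Phi P (rhoJ xit J) c - lam c) = u"
      using J0 by (intro bexI[of _ "(J0, \<lambda>c. qhon c - Phi P (rhoJ xit J0) c - u c, \<lambda>c. \<bar>qhon c - Phi P (rhoJ xit J0) c - u c\<bar>)"]) auto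
  next
    fix d :: "('x \<times> 'b) cmat \<times> ('c \<Rightarrow> real) \<times> ('c \<Rightarrow> real)"
    assume d: "d \<in> {(J, lam, \<nu>). choi J \<and> (\<forall>c. - \<nu> c \<le> lam c \<and> lam c \<le> \<nu> c)}"
      and U0: "(case d of (J, lam, \<nu>) \<Rightarrow> \<lambda>c. qhon c - Phi P (rhoJ xit J) c - lam c) = (\<lambda>c. 0)"
    obtain J lam \<nu> where e: "d = (J, lam, \<nu>)" "choi J" "\<forall>c. - \<nu> c \<le> lam c \<and> lam c \<le> \<nu> c" using d by auto
    have eq: "\<forall>c. qhon c - Phi P (rhoJ xit J) c - lam c = 0" using U0 unfolding e by (auto simp: fun_eq_iff)
    have "r_SDP \<le> ereal (L (rhoJ xig J) \<nu>)" unfolding r_SDP_def by (rule Inf_lower) (use e eq in blast)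
    then show "p2 \<le> (case d of (J, lam, \<nu>) \<Rightarrow> L (rhoJ xig J) \<nu>)" unfolding e(1) p2e[symmetric] by simp
  qed
  then obtain g2 where g2a: "\<forall>d\<in>{(J :: ('x \<times> 'b) cmat, lam :: 'c \<Rightarrow> real, \<nu> :: 'c \<Rightarrow> real). choi J \<and> (\<forall>c. - \<nu> c \<le> lam c \<and> lam c \<le> \<nu> c)}.
      p2 \<le> (case d of (J, lam, \<nu>) \<Rightarrow> L (rhoJ xig J) \<nu>)
        + dotv g2 (case d of (J, lam, \<nu>) \<Rightarrow> (\<lambda>c. qhon c - Phi P (rhoJ xit J) c - lam c))" by blast
  have g2: "p2 \<le> L (rhoJ xig J) \<nu> + dotv g2 (\<lambda>c. qhon c - Phi P (rhoJ xit J) c - lam c)"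
    if "choi J" "\<forall>c. - \<nu> c \<le> lam c \<and> lam c \<le> \<nu> c" for J lam \<nu>
    using g2a[rule_format, of "(J, lam, \<nu>)"] that by simp
  have "ereal p2 \<le> Lag g2" unfolding Lag_def
    by (rule Inf_greatest) (clarsimp simp: g2)
  moreover have "Lag g2 \<le> r_SDP" unfolding Lag_def r_SDP_def
  proof (rule Inf_superset_mono, rule subsetI)
    fix x assume "x \<in> {ereal (L (rhoJ xig J) \<nu>) | (J :: ('x \<times> 'b) cmat) lam \<nu>.
                       choi J \<and> (\<forall>c. qhon c - Phi P (rhoJ xit J) c - lam c = 0)
                       \<and> (\<forall>c. - \<nu> c \<le> lam c \<and> lam c \<le> \<nu> c)}"
    then obtain J lam \<nu> where J: "choi J" "\<forall>c. qhon c - Phi P (rhoJ xit J) c - lam c = 0"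
      "\<forall>c. - \<nu> c \<le> lam c \<and> lam c \<le> \<nu> c" and xx: "x = ereal (L (rhoJ xig J) \<nu>)" by blast
    have "dotv g2 (\<lambda>c. qhon c - Phi P (rhoJ xit J) c - lam c) = 0" using J(2) unfolding dotv_def by simp
    then have "x = ereal (L (rhoJ xig J) \<nu> + dotv g2 (\<lambda>c. qhon c - Phi P (rhoJ xit J) c - lam c))" using xx by simp
    then show "x \<in> {ereal (L (rhoJ xig J) \<nu> + dotv g2 (\<lambda>c. qhon c - Phi P (rhoJ xit J) c - lam c)) | (J :: ('x \<times> 'b) cmat) lam \<nu>.
                           choi J \<and> (\<forall>c. - \<nu> c \<le> lam c \<and> lam c \<le> \<nu> c)}" using J by blast
  qed
  ultimately have part3: "r_SDP = Lag g2" using p2e by simp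

  have part4: "r_SDP = Lag gs \<longrightarrow> (\<exists>k. cross_mtf W P xig xit gs k
                     \<and> ereal (dotv gs qhon + k - T_hat \<phi>0 \<phi>1 gs) \<ge> r_SDP)" for gs
  proof
    assume r: "r_SDP = Lag gs"
    have H: "p2 \<le> W (rhoJ xig J) + s_fun \<phi>0 \<phi>1 ((\<Sum>c\<in>UNIV. \<bar>lam c\<bar>) / 2) + dotv gs (\<lambda>c. qhon c - Phi P (rhoJ xit J) c - lam c)"
      if J: "choi J" for J lam
    proof -
      have "ereal p2 \<le> ereal (L (rhoJ xig J) (\<lambda>c. \<bar>lam c\<bar>) + dotv gs (\<lambda>c. qhon c - Phi P (rhoJ xit J) c - lam c))"
        unfolding p2e r Lag_def
        by (rule Inf_lower) (use J in \<open>intro CollectI exI[of _ J] exI[of _ lam] exI[of _ "\<lambda>c. \<bar>lam c\<bar>"], auto\<close>)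
      moreover have "L (rhoJ xig J) (\<lambda>c. \<bar>lam c\<bar>) \<le> W (rhoJ xig J) + s_fun \<phi>0 \<phi>1 ((\<Sum>c\<in>UNIV. \<bar>lam c\<bar>) / 2)"
        using L_le J by blast
      ultimately show ?thesis by simp
    qed
    have "cross_mtf W P xig xit gs (p2 - dotv gs qhon + T_hat \<phi>0 \<phi>1 gs)"
      by (rule cross_mtf_of[OF phi0 phi1]) (use H in blast)
    then show "\<exists>k. cross_mtf W P xig xit gs k \<and> ereal (dotv gs qhon + k - T_hat \<phi>0 \<phi>1 gs) \<ge> r_SDP"
      by (intro exI[of _ "p2 - dotv gs qhon + T_hat \<phi>0 \<phi>1 gs"]) (simp add: p2e[symmetric])
  qed

  show ?thesis
    using part1 part2 part3 part4 unfolding Set1_def Set2_def Lag_def by blast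
qed


end
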